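(* Let $\mathcal T$ be an orbital category. If $\mathcal C,\mathcal D$ are unital $\mathcal T$-weak indexing systems, then $\mathfrak R(\mathcal C)\vee\mathfrak R(\mathcal D)=\mathfrak R(\mathcal C\vee\mathcal D)$ (join in $\mathrm{Transf}_{\mathcal T}$ on the left, in weak indexing systems on the right) and $\mathfrak R(\mathcal C)\cap\mathfrak R(\mathcal D)=\mathfrak R(\mathcal C\cap\mathcal D)$.
   Context: For a small category $\mathcal T$, $\mathbb F_{\mathcal T}$ is the full subcategory of $\mathrm{Fun}(\mathcal T^{op},\mathrm{Set})$ on finite coproducts of representables; $\mathcal T$ is orbital if $\mathbb F_{\mathcal T}$ has pullbacks. $\mathbb F_V:=\mathbb F_{\mathcal T,/V}$, $*_V$ terminal; for $U\to V$, $\mathrm{Res}^V_U$ is pullback and $\mathrm{Ind}^V_U$ postcomposition. A full $\mathcal T$-subcategory assigns isomorphism-closed classes $\mathcal C_V\subseteq\mathrm{Ob}\,\mathbb F_V$ stable under restriction. For $S\in\mathbb F_V$ with orbits $U$ and $T_U\in\mathbb F_U$, $\coprod_U^ST_U:=\coprod_U\mathrm{Ind}_U^VT_U$. A $\mathcal T$-weak indexing system is a full $\mathcal T$-subcategory with $\mathcal C_V\neq\emptyset\Rightarrow *_V\in\mathcal C_V$ and closed under $\coprod^S_UT_U$ for $S\in\mathcal C_V$, $T_U\in\mathcal C_U$; these form a lattice under inclusion. It is unital if every $\mathcal C_V$ is nonempty and $S\sqcup S'\in\mathcal C_V\Rightarrow S,S'\in\mathcal C_V$. A transfer system is a wide subcategory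 $R\subseteq\mathcal T$ containing all isomorphisms such that for every commutative square $V'\to V$, $\alpha':V'\to U'$, $\alpha:V\to U$, $U'\to U$ with $\alpha\in R$ and $V'\to V\times_UU'$ a summand inclusion in $\mathbb F_{\mathcal T}$, $\alpha'\in R$; $\mathrm{Transf}_{\mathcal T}$ is their poset under inclusion. For unital $\mathcal C$, $\mathfrak R(\mathcal C)$ is the transfer system of maps $U\to V$ in $\mathcal T$ with $U$ (as a $V$-set) in $\mathcal C_V$. *)

theory Defs
  imports Main
begin

record ('o, 'm) cat =
  ob  :: "'o set"
  mr  :: "'m set"
  dm  :: "'m \<Rightarrow> 'o"
  cd  :: "'m \<Rightarrow> 'o"
  idm :: "'o \<Rightarrow> 'm"
  cmp :: "'m \<Rightarrow> 'm \<Rightarrow> 'm"   (* cmp T g f = g \<circ> f *)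

definition hom :: "('o,'m) cat \<Rightarrow> 'o \<Rightarrow> 'o \<Rightarrow> 'm set" where
  "hom T X Y = {f \<in> mr T. dm T f = X \<and> cd T f = Y}"

definition category :: "('o,'m) cat \<Rightarrow> bool" where
  "category T \<longleftrightarrow>
     (\<forall>f\<in>mr T. dm T f \<in> ob T \<and> cd T f \<in> ob T) \<and>
     (\<forall>X\<in>ob T. idm T X \<in> hom T X X) \<and>
     (\<forall>f\<in>mr T. \<forall>g\<in>mr T. cd T f = dm T g \<longrightarrow> cmp T g f \<in> hom T (dm T f) (cd T g)) \<and>
     (\<forall>f\<in>mr T. cmp T (idm T (cd T f)) f = f \<and> cmp T f (idm T (dm T f)) = f) \<and>
     (\<forall>f\<in>mr T. \<forall>g\<in>mr T. \<forall>h\<in>mr T. cd T f = dm T g \<longrightarrow> cd T g = dm T h \<longrightarrow>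
        cmp T h (cmp T g f) = cmp T (cmp T h g) f)"

definition iso :: "('o,'m) cat \<Rightarrow> 'm \<Rightarrow> bool" where
  "iso T f \<longleftrightarrow> f \<in> mr T \<and> (\<exists>g\<in>hom T (cd T f) (dm T f).
      cmp T g f = idm T (dm T f) \<and> cmp T f g = idm T (cd T f))"

text \<open>An object of F_T (a finite coproduct of representables) is encoded by the list of
  its orbits (objects of T).  By the Yoneda lemma a map from the coproduct of xs to the
  coproduct of ys is a function f on indices together with maps xs!i to ys!(f i) in T;
  we encode it as a pair (f, phi), considered up to equality on the indices below length xs.\<close>

type_synonym 'm fmor = "(nat \<Rightarrow> nat) \<times> (nat \<Rightarrow> 'm)"

definition F_obj :: "('o,'m) cat \<Rightarrow> 'o list \<Rightarrow> bool" where
  "F_obj T xs \<longleftrightarrow> set xs \<subseteq> ob T"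

definition F_hom :: "('o,'m) cat \<Rightarrow> 'o list \<Rightarrow> 'o list \<Rightarrow> 'm fmor \<Rightarrow> bool" where
  "F_hom T xs ys m \<longleftrightarrow> F_obj T xs \<and> F_obj T ys \<and>
     (\<forall>i<length xs. fst m i < length ys \<and> snd m i \<in> hom T (xs!i) (ys!(fst m i)))"

definition F_comp :: "('o,'m) cat \<Rightarrow> 'm fmor \<Rightarrow> 'm fmor \<Rightarrow> 'm fmor" where
  "F_comp T g f = (fst g \<circ> fst f, \<lambda>i. cmp T (snd g (fst f i)) (snd f i))"

definition F_id :: "('o,'m) cat \<Rightarrow> 'o list \<Rightarrow> 'm fmor" where
  "F_id T xs = (id, \<lambda>i. idm T (xs!i))"

definition F_eq :: "'o list \<Rightarrow> 'm fmor \<Rightarrow> 'm fmor \<Rightarrow> bool" where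
  "F_eq xs m m' \<longleftrightarrow> (\<forall>i<length xs. fst m i = fst m' i \<and> snd m i = snd m' i)"

definition F_iso :: "('o,'m) cat \<Rightarrow> 'o list \<Rightarrow> 'o list \<Rightarrow> 'm fmor \<Rightarrow> bool" where
  "F_iso T xs ys m \<longleftrightarrow> F_hom T xs ys m \<and>
     (\<exists>m'. F_hom T ys xs m' \<and> F_eq xs (F_comp T m' m) (F_id T xs) \<and>
           F_eq ys (F_comp T m m') (F_id T ys))"

definition is_F_pullback :: "('o,'m) cat \<Rightarrow> 'o list \<Rightarrow> 'o list \<Rightarrow> 'o list \<Rightarrow> 'm fmor \<Rightarrow> 'm fmor
    \<Rightarrow> 'o list \<Rightarrow> 'm fmor \<Rightarrow> 'm fmor \<Rightarrow> bool" where
  "is_F_pullback T X Y Z f g P p q \<longleftrightarrow>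
     F_hom T X Z f \<and> F_hom T Y Z g \<and> F_hom T P X p \<and> F_hom T P Y q \<and>
     F_eq P (F_comp T f p) (F_comp T g q) \<and>
     (\<forall>W a b. F_hom T W X a \<longrightarrow> F_hom T W Y b \<longrightarrow> F_eq W (F_comp T f a) (F_comp T g b) \<longrightarrow>
        (\<exists>h. F_hom T W P h \<and> F_eq W (F_comp T p h) a \<and> F_eq W (F_comp T q h) b \<and>
           (\<forall>h'. F_hom T W P h' \<and> F_eq W (F_comp T p h') a \<and> F_eq W (F_comp T q h') b
                  \<longrightarrow> F_eq W h' h)))"

definition orbital :: "('o,'m) cat \<Rightarrow> bool" where
  "orbital T \<longleftrightarrow> category T \<and>
     (\<forall>X Y Z f g. F_hom T X Z f \<longrightarrow> F_hom T Y Z g \<longrightarrow> (\<exists>P p q. is_F_pullback T X Y Z f g P p q))"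

definition F_summand_incl :: "('o,'m) cat \<Rightarrow> 'o list \<Rightarrow> 'o list \<Rightarrow> 'm fmor \<Rightarrow> bool" where
  "F_summand_incl T xs ys m \<longleftrightarrow> F_hom T xs ys m \<and>
     (\<exists>zs h. F_obj T zs \<and> F_iso T (xs @ zs) ys h \<and> F_eq xs m (F_comp T h (F_id T xs)))"

text \<open>A morphism of T, viewed as a morphism between representables in F_T.\<close>
definition single :: "'m \<Rightarrow> 'm fmor" where
  "single a = (\<lambda>_. 0, \<lambda>_. a)"

text \<open>An object of F_V = F_T/V is a list of morphisms p_i : U_i \<rightarrow> V of T (one per orbit).\<close>

definition S_obj :: "('o,'m) cat \<Rightarrow> 'o \<Rightarrow> 'm list \<Rightarrow> bool" where
  "S_obj T V ps \<longleftrightarrow> V \<in> ob T \<and> (\<forall>p\<in>set ps. p \<in> mr T \<and> cd T p = V)"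

definition S_hom :: "('o,'m) cat \<Rightarrow> 'o \<Rightarrow> 'm list \<Rightarrow> 'm list \<Rightarrow> 'm fmor \<Rightarrow> bool" where
  "S_hom T V ps qs m \<longleftrightarrow> S_obj T V ps \<and> S_obj T V qs \<and>
     F_hom T (map (dm T) ps) (map (dm T) qs) m \<and>
     (\<forall>i<length ps. cmp T (qs!(fst m i)) (snd m i) = ps!i)"

definition S_iso :: "('o,'m) cat \<Rightarrow> 'o \<Rightarrow> 'm list \<Rightarrow> 'm list \<Rightarrow> 'm fmor \<Rightarrow> bool" where
  "S_iso T V ps qs m \<longleftrightarrow> S_hom T V ps qs m \<and>
     (\<exists>m'. S_hom T V qs ps m' \<and> F_eq (map (dm T) ps) (F_comp T m' m) (F_id T (map (dm T) ps)) \<and>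
           F_eq (map (dm T) qs) (F_comp T m m') (F_id T (map (dm T) qs)))"

definition S_struct :: "'m list \<Rightarrow> 'm fmor" where
  "S_struct ps = (\<lambda>_. 0, \<lambda>i. ps!i)"

definition Ind :: "('o,'m) cat \<Rightarrow> 'm \<Rightarrow> 'm list \<Rightarrow> 'm list" where
  "Ind T a qs = map (cmp T a) qs"

text \<open>Coproduct over the orbits of S of Ind T_U (orbits of S = list entries).\<close>
definition S_coprod :: "('o,'m) cat \<Rightarrow> 'm list \<Rightarrow> (nat \<Rightarrow> 'm list) \<Rightarrow> 'm list" where
  "S_coprod T S Ts = concat (map (\<lambda>i. Ind T (S!i) (Ts i)) [0..<length S])"

type_synonym ('o,'m) tsub = "'o \<Rightarrow> 'm list set"

definition full_T_subcat :: "('o,'m) cat \<Rightarrow> ('o,'m) tsub \<Rightarrow> bool" where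
  "full_T_subcat T C \<longleftrightarrow>
     (\<forall>V\<in>ob T. C V \<subseteq> {S. S_obj T V S}) \<and>
     (\<forall>V\<in>ob T. \<forall>S\<in>C V. \<forall>S' m. S_iso T V S S' m \<longrightarrow> S' \<in> C V) \<and>
     (\<comment> \<open>stable under restriction Res^V_U (pullback along a : U \<rightarrow> V)\<close>
      \<forall>U V a S P p q. a \<in> hom T U V \<longrightarrow> S \<in> C V \<longrightarrow>
        is_F_pullback T (map (dm T) S) [U] [V] (S_struct S) (single a) P p q \<longrightarrow>
        map (snd q) [0..<length P] \<in> C U)"

definition weak_indexing_system :: "('o,'m) cat \<Rightarrow> ('o,'m) tsub \<Rightarrow> bool" where
  "weak_indexing_system T C \<longleftrightarrow> full_T_subcat T C \<and>
     (\<forall>V\<in>ob T. C V \<noteq> {} \<longrightarrow> [idm T V] \<in> C V) \<and>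
     (\<forall>V\<in>ob T. \<forall>S\<in>C V. \<forall>Ts. (\<forall>i<length S. Ts i \<in> C (dm T (S!i))) \<longrightarrow> S_coprod T S Ts \<in> C V)"

definition unital_wis :: "('o,'m) cat \<Rightarrow> ('o,'m) tsub \<Rightarrow> bool" where
  "unital_wis T C \<longleftrightarrow> weak_indexing_system T C \<and>
     (\<forall>V\<in>ob T. C V \<noteq> {} \<and> (\<forall>S S'. S @ S' \<in> C V \<longrightarrow> S \<in> C V \<and> S' \<in> C V))"

definition wis_join :: "('o,'m) cat \<Rightarrow> ('o,'m) tsub \<Rightarrow> ('o,'m) tsub \<Rightarrow> ('o,'m) tsub" where
  "wis_join T C D = (\<lambda>V. if V \<in> ob T then
      \<Inter>{E V | E. weak_indexing_system T E \<and> (\<forall>W\<in>ob T. C W \<subseteq> E W \<and> D W \<subseteq> E W)}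
    else {})"

definition wis_meet :: "('o,'m) tsub \<Rightarrow> ('o,'m) tsub \<Rightarrow> ('o,'m) tsub" where
  "wis_meet C D = (\<lambda>V. C V \<inter> D V)"

definition transfer_system :: "('o,'m) cat \<Rightarrow> 'm set \<Rightarrow> bool" where
  "transfer_system T R \<longleftrightarrow> R \<subseteq> mr T \<and>
     (\<forall>f. iso T f \<longrightarrow> f \<in> R) \<and>
     (\<forall>f\<in>R. \<forall>g\<in>R. cd T f = dm T g \<longrightarrow> cmp T g f \<in> R) \<and>
     (\<forall>V' V U' U b a' a c.
        b \<in> hom T V' V \<longrightarrow> a' \<in> hom T V' U' \<longrightarrow> a \<in> hom T V U \<longrightarrow> c \<in> hom T U' U \<longrightarrow>
        cmp T a b = cmp T c a' \<longrightarrow> a \<in> R \<longrightarrow>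
        (\<exists>P p q m. is_F_pullback T [V] [U'] [U] (single a) (single c) P p q \<and>
           F_hom T [V'] P m \<and> F_eq [V'] (F_comp T p m) (single b) \<and>
           F_eq [V'] (F_comp T q m) (single a') \<and> F_summand_incl T [V'] P m) \<longrightarrow>
        a' \<in> R)"

definition transf_join :: "('o,'m) cat \<Rightarrow> 'm set \<Rightarrow> 'm set \<Rightarrow> 'm set" where
  "transf_join T R1 R2 = \<Inter>{R. transfer_system T R \<and> R1 \<union> R2 \<subseteq> R}"

definition frakR :: "('o,'m) cat \<Rightarrow> ('o,'m) tsub \<Rightarrow> 'm set" where
  "frakR T C = {a \<in> mr T. [a] \<in> C (cd T a)}"

end

theory Submission
  imports Defs
begin

lemma cat_facts:
  assumes "category T"
  shows cat_dmcd: "f \<in> mr T \<Longrightarrow> dm T f \<in> ob T \<and> cd T f \<in> ob T"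
    and cat_id: "X \<in> ob T \<Longrightarrow> idm T X \<in> mr T \<and> dm T (idm T X) = X \<and> cd T (idm T X) = X"
    and cat_comp: "f \<in> mr T \<Longrightarrow> g \<in> mr T \<Longrightarrow> cd T f = dm T g \<Longrightarrow>
        cmp T g f \<in> mr T \<and> dm T (cmp T g f) = dm T f \<and> cd T (cmp T g f) = cd T g"
    and cat_idl: "f \<in> mr T \<Longrightarrow> cmp T (idm T (cd T f)) f = f"
    and cat_idr: "f \<in> mr T \<Longrightarrow> cmp T f (idm T (dm T f)) = f"
    and cat_assoc: "f \<in> mr T \<Longrightarrow> g \<in> mr T \<Longrightarrow> h \<in> mr T \<Longrightarrow> cd T f = dm T g \<Longrightarrow> cd T g = dm T h \<Longrightarrow>
        cmp T (cmp T h g) f = cmp T h (cmp T g f)"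
  using assms unfolding category_def hom_def by auto

lemma hom_iff: "f \<in> hom T A B \<longleftrightarrow> f \<in> mr T \<and> dm T f = A \<and> cd T f = B"
  by (simp add: hom_def)

lemma comp_hom: "category T \<Longrightarrow> f \<in> hom T A B \<Longrightarrow> g \<in> hom T B C \<Longrightarrow> cmp T g f \<in> hom T A C"
  using cat_comp by (fastforce simp: hom_iff)

lemma id_hom: "category T \<Longrightarrow> A \<in> ob T \<Longrightarrow> idm T A \<in> hom T A A"
  using cat_id by (fastforce simp: hom_iff)

lemma hom_ob: "category T \<Longrightarrow> f \<in> hom T A B \<Longrightarrow> A \<in> ob T \<and> B \<in> ob T"
  using cat_dmcd by (fastforce simp: hom_iff)

lemma idl: "category T \<Longrightarrow> f \<in> hom T A B \<Longrightarrow> cmp T (idm T B) f = f"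
  using cat_idl by (fastforce simp: hom_iff)

lemma idr: "category T \<Longrightarrow> f \<in> hom T A B \<Longrightarrow> cmp T f (idm T A) = f"
  using cat_idr by (fastforce simp: hom_iff)

lemma assoc: "category T \<Longrightarrow> f \<in> hom T A B \<Longrightarrow> g \<in> hom T B C \<Longrightarrow> h \<in> hom T C D \<Longrightarrow>
   cmp T (cmp T h g) f = cmp T h (cmp T g f)"
  using cat_assoc by (fastforce simp: hom_iff)

definition pb_el :: "('o,'m) cat \<Rightarrow> 'o list \<Rightarrow> 'o list \<Rightarrow> 'o list \<Rightarrow> 'm fmor \<Rightarrow> 'm fmor
    \<Rightarrow> 'o list \<Rightarrow> 'm fmor \<Rightarrow> 'm fmor \<Rightarrow> bool" where
  "pb_el T X Y Z f g P p q \<longleftrightarrow>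
     F_hom T X Z f \<and> F_hom T Y Z g \<and> F_hom T P X p \<and> F_hom T P Y q \<and>
     F_eq P (F_comp T f p) (F_comp T g q) \<and>
     (\<forall>w x y \<alpha> \<beta>. w \<in> ob T \<longrightarrow> x < length X \<longrightarrow> y < length Y \<longrightarrow> \<alpha> \<in> hom T w (X!x) \<longrightarrow>
        \<beta> \<in> hom T w (Y!y) \<longrightarrow> fst f x = fst g y \<longrightarrow> cmp T (snd f x) \<alpha> = cmp T (snd g y) \<beta> \<longrightarrow>
        (\<exists>j<length P. \<exists>u\<in>hom T w (P!j). fst p j = x \<and> cmp T (snd p j) u = \<alpha> \<and>
            fst q j = y \<and> cmp T (snd q j) u = \<beta>)) \<and>
     (\<forall>w j j' u u'. j < length P \<longrightarrow> j' < length P \<longrightarrow> u \<in> hom T w (P!j) \<longrightarrow> u' \<in> hom T w (P!j') \<longrightarrow>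
        fst p j = fst p j' \<longrightarrow> fst q j = fst q j' \<longrightarrow> cmp T (snd p j) u = cmp T (snd p j') u' \<longrightarrow>
        cmp T (snd q j) u = cmp T (snd q j') u' \<longrightarrow> j = j' \<and> u = u')"

lemma F_homD: "F_hom T X Y m \<Longrightarrow> i < length X \<Longrightarrow> fst m i < length Y \<and> snd m i \<in> hom T (X!i) (Y!(fst m i))"
  by (simp add: F_hom_def)

lemma F_hom_ob: "category T \<Longrightarrow> F_hom T X Y m \<Longrightarrow> i < length X \<Longrightarrow> X!i \<in> ob T"
  by (auto simp: F_hom_def F_obj_def)

lemma pb_to_el:
  assumes cat: "category T" and pb: "is_F_pullback T X Y Z f g P p q"
  shows "pb_el T X Y Z f g P p q"
proof -
  have hf: "F_hom T X Z f" and hg: "F_hom T Y Z g" and hp: "F_hom T P X p" and hq: "F_hom T P Y q"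
    and comm: "F_eq P (F_comp T f p) (F_comp T g q)"
    and univ: "\<And>W a b. F_hom T W X a \<Longrightarrow> F_hom T W Y b \<Longrightarrow> F_eq W (F_comp T f a) (F_comp T g b) \<Longrightarrow>
        (\<exists>h. F_hom T W P h \<and> F_eq W (F_comp T p h) a \<and> F_eq W (F_comp T q h) b \<and>
           (\<forall>h'. F_hom T W P h' \<and> F_eq W (F_comp T p h') a \<and> F_eq W (F_comp T q h') b
                  \<longrightarrow> F_eq W h' h))"
    using pb unfolding is_F_pullback_def by blast+
  have ex: "\<exists>j<length P. \<exists>u\<in>hom T w (P!j). fst p j = x \<and> cmp T (snd p j) u = \<alpha> \<and>
            fst q j = y \<and> cmp T (snd q j) u = \<beta>"
    if "w \<in> ob T" "x < length X" "y < length Y" "\<alpha> \<in> hom T w (X!x)" "\<beta> \<in> hom T w (Y!y)"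
       "fst f x = fst g y" "cmp T (snd f x) \<alpha> = cmp T (snd g y) \<beta>" for w x y \<alpha> \<beta>
  proof -
    have "F_hom T [w] X (\<lambda>_. x, \<lambda>_. \<alpha>)" using that hf by (auto simp: F_hom_def F_obj_def)
    moreover have "F_hom T [w] Y (\<lambda>_. y, \<lambda>_. \<beta>)" using that hg by (auto simp: F_hom_def F_obj_def)
    moreover have "F_eq [w] (F_comp T f (\<lambda>_. x, \<lambda>_. \<alpha>)) (F_comp T g (\<lambda>_. y, \<lambda>_. \<beta>))"
      using that by (simp add: F_eq_def F_comp_def)
    ultimately obtain h where h: "F_hom T [w] P h" "F_eq [w] (F_comp T p h) (\<lambda>_. x, \<lambda>_. \<alpha>)"
      "F_eq [w] (F_comp T q h) (\<lambda>_. y, \<lambda>_. \<beta>)" using univ by blast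
    show ?thesis
      apply (rule exI[of _ "fst h 0"])
      using h by (auto simp: F_hom_def F_eq_def F_comp_def)
  qed
  have un: "j = j' \<and> u = u'"
    if "j < length P" "j' < length P" "u \<in> hom T w (P!j)" "u' \<in> hom T w (P!j')"
       "fst p j = fst p j'" "fst q j = fst q j'" "cmp T (snd p j) u = cmp T (snd p j') u'"
        "cmp T (snd q j) u = cmp T (snd q j') u'" for w j j' u u'
  proof -
    have w: "w \<in> ob T" using hom_ob[OF cat that(3)] by blast
    have pj: "fst p j < length X" "snd p j \<in> hom T (P!j) (X!(fst p j))" using F_homD[OF hp that(1)] by auto
    have qj: "fst q j < length Y" "snd q j \<in> hom T (P!j) (Y!(fst q j))" using F_homD[OF hq that(1)] by auto
    have fj: "snd f (fst p j) \<in> hom T (X!(fst p j)) (Z!(fst f (fst p j)))" using F_homD[OF hf pj(1)] by auto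
    have gj: "snd g (fst q j) \<in> hom T (Y!(fst q j)) (Z!(fst g (fst q j)))" using F_homD[OF hg qj(1)] by auto
    have c1: "fst f (fst p j) = fst g (fst q j)" and
      c2: "cmp T (snd f (fst p j)) (snd p j) = cmp T (snd g (fst q j)) (snd q j)"
      using comm that(1) by (auto simp: F_eq_def F_comp_def)
    define a where "a = ((\<lambda>_::nat. fst p j), (\<lambda>_::nat. cmp T (snd p j) u))"
    define b where "b = ((\<lambda>_::nat. fst q j), (\<lambda>_::nat. cmp T (snd q j) u))"
    have cpu: "cmp T (snd p j) u \<in> hom T w (X!(fst p j))" using comp_hom[OF cat that(3) pj(2)] .
    have cqu: "cmp T (snd q j) u \<in> hom T w (Y!(fst q j))" using comp_hom[OF cat that(3) qj(2)] .
    have ha: "F_hom T [w] X a" using pj hf w cpu unfolding a_def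
      by (auto simp: F_hom_def F_obj_def)
    have hb: "F_hom T [w] Y b" using qj hq w cqu unfolding b_def
      by (auto simp: F_hom_def F_obj_def)
    have "cmp T (snd f (fst p j)) (cmp T (snd p j) u) = cmp T (snd g (fst q j)) (cmp T (snd q j) u)"
      using assoc[OF cat that(3) pj(2) fj] assoc[OF cat that(3) qj(2) gj] c2 by simp
    then have e: "F_eq [w] (F_comp T f a) (F_comp T g b)" using c1 unfolding a_def b_def
      by (simp add: F_eq_def F_comp_def)
    obtain h where h: "\<forall>h'. F_hom T [w] P h' \<and> F_eq [w] (F_comp T p h') a \<and> F_eq [w] (F_comp T q h') b
                  \<longrightarrow> F_eq [w] h' h" using univ[OF ha hb e] by blast
    have "F_eq [w] (\<lambda>_. j, \<lambda>_. u) h"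
      apply (rule h[rule_format]) using that w hp unfolding a_def b_def
      by (auto simp: F_hom_def F_obj_def F_eq_def F_comp_def)
    moreover have "F_eq [w] (\<lambda>_. j', \<lambda>_. u') h"
      apply (rule h[rule_format]) using that w hp unfolding a_def b_def
      by (auto simp: F_hom_def F_obj_def F_eq_def F_comp_def)
    ultimately show ?thesis by (simp add: F_eq_def)
  qed
  show ?thesis unfolding pb_el_def using hf hg hp hq comm ex un by blast
qed

lemma el_to_pb:
  assumes cat: "category T" and el: "pb_el T X Y Z f g P p q"
  shows "is_F_pullback T X Y Z f g P p q"
proof -
  have hf: "F_hom T X Z f" and hg: "F_hom T Y Z g" and hp: "F_hom T P X p" and hq: "F_hom T P Y q"
    and comm: "F_eq P (F_comp T f p) (F_comp T g q)"
    and ex: "\<And>w x y \<alpha> \<beta>. w \<in> ob T \<Longrightarrow> x < length X \<Longrightarrow> y < length Y \<Longrightarrow> \<alpha> \<in> hom T w (X!x) \<Longrightarrow>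
        \<beta> \<in> hom T w (Y!y) \<Longrightarrow> fst f x = fst g y \<Longrightarrow> cmp T (snd f x) \<alpha> = cmp T (snd g y) \<beta> \<Longrightarrow>
        (\<exists>j<length P. \<exists>u\<in>hom T w (P!j). fst p j = x \<and> cmp T (snd p j) u = \<alpha> \<and>
            fst q j = y \<and> cmp T (snd q j) u = \<beta>)"
    and un: "\<And>w j j' u u'. j < length P \<Longrightarrow> j' < length P \<Longrightarrow> u \<in> hom T w (P!j) \<Longrightarrow> u' \<in> hom T w (P!j') \<Longrightarrow>
        fst p j = fst p j' \<Longrightarrow> fst q j = fst q j' \<Longrightarrow> cmp T (snd p j) u = cmp T (snd p j') u' \<Longrightarrow>
        cmp T (snd q j) u = cmp T (snd q j') u' \<Longrightarrow> j = j' \<and> u = u'"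
    using el unfolding pb_el_def by blast+
  have "\<exists>h. F_hom T W P h \<and> F_eq W (F_comp T p h) a \<and> F_eq W (F_comp T q h) b \<and>
           (\<forall>h'. F_hom T W P h' \<and> F_eq W (F_comp T p h') a \<and> F_eq W (F_comp T q h') b
                  \<longrightarrow> F_eq W h' h)"
    if ha: "F_hom T W X a" and hb: "F_hom T W Y b" and e: "F_eq W (F_comp T f a) (F_comp T g b)" for W a b
  proof -
    have "\<forall>i. \<exists>ju. i < length W \<longrightarrow> (fst ju < length P \<and> snd ju \<in> hom T (W!i) (P!(fst ju)) \<and>
        fst p (fst ju) = fst a i \<and> cmp T (snd p (fst ju)) (snd ju) = snd a i \<and>
        fst q (fst ju) = fst b i \<and> cmp T (snd q (fst ju)) (snd ju) = snd b i)"
    proof (intro allI)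
      fix i
      show "\<exists>ju. i < length W \<longrightarrow> (fst ju < length P \<and> snd ju \<in> hom T (W!i) (P!(fst ju)) \<and>
        fst p (fst ju) = fst a i \<and> cmp T (snd p (fst ju)) (snd ju) = snd a i \<and>
        fst q (fst ju) = fst b i \<and> cmp T (snd q (fst ju)) (snd ju) = snd b i)"
      proof (cases "i < length W")
        case True
        have "W!i \<in> ob T" using F_hom_ob[OF cat ha True] .
        moreover have "fst a i < length X" "snd a i \<in> hom T (W!i) (X!(fst a i))" using F_homD[OF ha True] by auto
        moreover have "fst b i < length Y" "snd b i \<in> hom T (W!i) (Y!(fst b i))" using F_homD[OF hb True] by auto
        moreover have "fst f (fst a i) = fst g (fst b i)" "cmp T (snd f (fst a i)) (snd a i) = cmp T (snd g (fst b i)) (snd b i)"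
          using e True by (auto simp: F_eq_def F_comp_def)
        ultimately obtain j u where "j<length P" "u\<in>hom T (W!i) (P!j)" "fst p j = fst a i" "cmp T (snd p j) u = snd a i"
            "fst q j = fst b i" "cmp T (snd q j) u = snd b i" using ex by metis
        then show ?thesis by (intro exI[of _ "(j,u)"]) auto
      qed auto
    qed
    then obtain H where H: "\<And>i. i < length W \<Longrightarrow> (fst (H i) < length P \<and> snd (H i) \<in> hom T (W!i) (P!(fst (H i))) \<and>
        fst p (fst (H i)) = fst a i \<and> cmp T (snd p (fst (H i))) (snd (H i)) = snd a i \<and>
        fst q (fst (H i)) = fst b i \<and> cmp T (snd q (fst (H i))) (snd (H i)) = snd b i)" by metis
    define h where "h = ((\<lambda>i. fst (H i)), (\<lambda>i. snd (H i)))"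
    have "F_obj T W" using ha by (simp add: F_hom_def)
    moreover have "F_obj T P" using hp by (simp add: F_hom_def)
    ultimately have h1: "F_hom T W P h" using H unfolding h_def by (simp add: F_hom_def)
    have h2: "F_eq W (F_comp T p h) a" "F_eq W (F_comp T q h) b" using H unfolding h_def
      by (auto simp: F_eq_def F_comp_def)
    have h3: "F_eq W h' h" if "F_hom T W P h'" "F_eq W (F_comp T p h') a" "F_eq W (F_comp T q h') b" for h'
      unfolding F_eq_def
    proof (intro allI impI)
      fix i assume i: "i < length W"
      have A: "fst h' i < length P" "snd h' i \<in> hom T (W!i) (P!(fst h' i))" using F_homD[OF that(1) i] by auto
      have "fst h' i = fst h i \<and> snd h' i = snd h i"
        apply (rule un[OF A(1) _ A(2)])
        using H[OF i] that(2,3) i unfolding h_def by (auto simp: F_eq_def F_comp_def)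
      then show "fst h' i = fst h i \<and> snd h' i = snd h i" .
    qed
    show ?thesis using h1 h2 h3 by blast
  qed
  then show ?thesis unfolding is_F_pullback_def using hf hg hp hq comm by blast
qed

lemma pb_iff_el: "category T \<Longrightarrow> is_F_pullback T X Y Z f g P p q \<longleftrightarrow> pb_el T X Y Z f g P p q"
  using pb_to_el el_to_pb by blast

definition invp :: "('o,'m) cat \<Rightarrow> 'm \<Rightarrow> 'm \<Rightarrow> 'o \<Rightarrow> 'o \<Rightarrow> bool" where
  "invp T u u' A B \<longleftrightarrow> u \<in> hom T A B \<and> u' \<in> hom T B A \<and> cmp T u' u = idm T A \<and> cmp T u u' = idm T B"

lemma F_hom_single: "category T \<Longrightarrow> a \<in> hom T A B \<Longrightarrow> F_hom T [A] [B] (single a)"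
  using hom_ob by (fastforce simp: F_hom_def F_obj_def single_def)

lemma nth_rot:
  assumes "l < length P" "i < length P"
  shows "(P!l # take l P @ drop (Suc l) P)!i = P!(if i = 0 then l else if i - 1 < l then i - 1 else i)"
proof (cases i)
  case 0 then show ?thesis by simp
next
  case (Suc k)
  have lt: "length (take l P) = l" using assms by simp
  show ?thesis
  proof (cases "k < l")
    case True then show ?thesis using Suc lt assms by (simp add: nth_append)
  next
    case False then show ?thesis using Suc lt assms by (simp add: nth_append)
  qed
qed

lemma summand_at:
  assumes cat: "category T" and P: "F_obj T P" and l: "l < length P"
  shows "F_summand_incl T [P!l] P (\<lambda>_. l, \<lambda>_. idm T (P!l))"
proof -
  define zs where "zs = take l P @ drop (Suc l) P"
  define xs where "xs = [P!l] @ zs"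
  define \<sigma> where "\<sigma> = (\<lambda>i::nat. if i = 0 then l else if i - 1 < l then i - 1 else i)"
  define \<tau> where "\<tau> = (\<lambda>j::nat. if j = l then 0 else if j < l then Suc j else j)"
  have len: "length xs = length P" using l unfolding xs_def zs_def by simp
  have nx: "xs!i = P!(\<sigma> i)" if "i < length P" for i
    using nth_rot[OF l that] unfolding xs_def zs_def \<sigma>_def by simp
  have s1: "\<sigma> i < length P" if "i < length P" for i using that l unfolding \<sigma>_def by auto
  have t1: "\<tau> j < length P" if "j < length P" for j using that l unfolding \<tau>_def by auto
  have st: "\<sigma> (\<tau> j) = j" for j unfolding \<sigma>_def \<tau>_def by auto
  have ts: "\<tau> (\<sigma> i) = i" if "i < length P" for i using that unfolding \<sigma>_def \<tau>_def by auto
  have ob: "P!i \<in> ob T" if "i < length P" for i using P that by (auto simp: F_obj_def)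
  have Pl: "P!l \<in> ob T" using ob l .
  have xsob: "F_obj T xs" using P l unfolding xs_def zs_def F_obj_def
    by (auto dest: in_set_takeD in_set_dropD)
  define h where "h = (\<sigma>, \<lambda>i. idm T (P!(\<sigma> i)))"
  define h' where "h' = (\<tau>, \<lambda>j. idm T (P!j))"
  have hh: "F_hom T xs P h" using xsob P len s1 nx id_hom[OF cat] ob unfolding h_def F_hom_def by auto
  have hh': "F_hom T P xs h'" using xsob P len t1 nx st id_hom[OF cat] ob unfolding h'_def F_hom_def by auto
  have e1: "F_eq xs (F_comp T h' h) (F_id T xs)"
    unfolding F_eq_def F_comp_def F_id_def h_def h'_def using len ts nx s1 idl[OF cat id_hom[OF cat]] ob
    by auto
  have e2: "F_eq P (F_comp T h h') (F_id T P)"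
    unfolding F_eq_def F_comp_def F_id_def h_def h'_def using st idl[OF cat id_hom[OF cat]] ob
    by auto
  have iso: "F_iso T xs P h" unfolding F_iso_def using hh hh' e1 e2 by blast
  have zsob: "F_obj T zs" using xsob unfolding xs_def by (simp add: F_obj_def)
  have m: "F_hom T [P!l] P (\<lambda>_. l, \<lambda>_. idm T (P!l))" using Pl P l id_hom[OF cat Pl]
    by (auto simp: F_hom_def F_obj_def)
  have e3: "F_eq [P!l] (\<lambda>_. l, \<lambda>_. idm T (P!l)) (F_comp T h (F_id T [P!l]))"
    unfolding F_eq_def F_comp_def F_id_def h_def \<sigma>_def using idl[OF cat id_hom[OF cat Pl]] by auto
  show ?thesis unfolding F_summand_incl_def using m zsob iso e3 unfolding xs_def by blast
qed

lemma replace_el: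
  assumes cat: "category T" and el: "pb_el T X Y Z f g P p q" and l: "l < length P"
    and inv: "invp T u u' V' (P!l)"
  shows "pb_el T X Y Z f g (P[l:=V']) (fst p, (snd p)(l := cmp T (snd p l) u))
           (fst q, (snd q)(l := cmp T (snd q l) u))"
proof -
  have hf: "F_hom T X Z f" and hg: "F_hom T Y Z g" and hp: "F_hom T P X p" and hq: "F_hom T P Y q"
    and comm: "F_eq P (F_comp T f p) (F_comp T g q)"
    and ex: "\<And>w x y \<alpha> \<beta>. w \<in> ob T \<Longrightarrow> x < length X \<Longrightarrow> y < length Y \<Longrightarrow> \<alpha> \<in> hom T w (X!x) \<Longrightarrow>
        \<beta> \<in> hom T w (Y!y) \<Longrightarrow> fst f x = fst g y \<Longrightarrow> cmp T (snd f x) \<alpha> = cmp T (snd g y) \<beta> \<Longrightarrow>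
        (\<exists>j<length P. \<exists>u\<in>hom T w (P!j). fst p j = x \<and> cmp T (snd p j) u = \<alpha> \<and>
            fst q j = y \<and> cmp T (snd q j) u = \<beta>)"
    and un: "\<And>w j j' u u'. j < length P \<Longrightarrow> j' < length P \<Longrightarrow> u \<in> hom T w (P!j) \<Longrightarrow> u' \<in> hom T w (P!j') \<Longrightarrow>
        fst p j = fst p j' \<Longrightarrow> fst q j = fst q j' \<Longrightarrow> cmp T (snd p j) u = cmp T (snd p j') u' \<Longrightarrow>
        cmp T (snd q j) u = cmp T (snd q j') u' \<Longrightarrow> j = j' \<and> u = u'"
    using el unfolding pb_el_def by blast+
  have u: "u \<in> hom T V' (P!l)" and u': "u' \<in> hom T (P!l) V'" and uu: "cmp T u' u = idm T V'"
    and uu': "cmp T u u' = idm T (P!l)" using inv unfolding invp_def by auto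
  have V': "V' \<in> ob T" using hom_ob[OF cat u] by blast
  define P2 where "P2 = P[l:=V']"
  define p2 where "p2 = (fst p, (snd p)(l := cmp T (snd p l) u))"
  define q2 where "q2 = (fst q, (snd q)(l := cmp T (snd q l) u))"
  have len: "length P2 = length P" unfolding P2_def by simp
  have P2l: "P2!l = V'" unfolding P2_def using l by simp
  have P2i: "i \<noteq> l \<Longrightarrow> P2!i = P!i" for i unfolding P2_def by simp
  have pl: "fst p l < length X" "snd p l \<in> hom T (P!l) (X!(fst p l))" using F_homD[OF hp l] by auto
  have ql: "fst q l < length Y" "snd q l \<in> hom T (P!l) (Y!(fst q l))" using F_homD[OF hq l] by auto
  have hp2: "F_hom T P2 X p2"
    using hp V' comp_hom[OF cat u pl(2)] unfolding F_hom_def p2_def P2_def F_obj_def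
    by (auto simp: nth_list_update set_update_subsetI)
  have hq2: "F_hom T P2 Y q2"
    using hq V' comp_hom[OF cat u ql(2)] unfolding F_hom_def q2_def P2_def F_obj_def
    by (auto simp: nth_list_update set_update_subsetI)
  have fl: "snd f (fst p l) \<in> hom T (X!(fst p l)) (Z!(fst f (fst p l)))" using F_homD[OF hf pl(1)] by auto
  have gl: "snd g (fst q l) \<in> hom T (Y!(fst q l)) (Z!(fst g (fst q l)))" using F_homD[OF hg ql(1)] by auto
  have cl: "fst f (fst p l) = fst g (fst q l)" "cmp T (snd f (fst p l)) (snd p l) = cmp T (snd g (fst q l)) (snd q l)"
    using comm l by (auto simp: F_eq_def F_comp_def)
  have comm2: "F_eq P2 (F_comp T f p2) (F_comp T g q2)"
    unfolding F_eq_def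
  proof (intro allI impI)
    fix i assume i: "i < length P2"
    show "fst (F_comp T f p2) i = fst (F_comp T g q2) i \<and> snd (F_comp T f p2) i = snd (F_comp T g q2) i"
    proof (cases "i = l")
      case True
      then show ?thesis using cl assoc[OF cat u pl(2) fl] assoc[OF cat u ql(2) gl]
        unfolding p2_def q2_def F_comp_def by simp
    next
      case False
      then show ?thesis using comm i len unfolding p2_def q2_def F_comp_def F_eq_def by simp
    qed
  qed
  define tr where "tr = (\<lambda>j v. if j = l then cmp T u v else v)"
  have tr: "tr j v \<in> hom T w (P!j) \<and> cmp T (snd p2 j) v = cmp T (snd p j) (tr j v) \<and>
     cmp T (snd q2 j) v = cmp T (snd q j) (tr j v)" if "j < length P" "v \<in> hom T w (P2!j)" for j v w
  proof (cases "j = l")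
    case True
    then have v: "v \<in> hom T w V'" using that P2l by simp
    show ?thesis using True comp_hom[OF cat v u] assoc[OF cat v u pl(2)] assoc[OF cat v u ql(2)]
      unfolding tr_def p2_def q2_def by simp
  next
    case False then show ?thesis using that P2i unfolding tr_def p2_def q2_def by simp
  qed
  have ex2: "\<exists>j<length P2. \<exists>v\<in>hom T w (P2!j). fst p2 j = x \<and> cmp T (snd p2 j) v = \<alpha> \<and>
            fst q2 j = y \<and> cmp T (snd q2 j) v = \<beta>"
    if hyps: "w \<in> ob T" "x < length X" "y < length Y" "\<alpha> \<in> hom T w (X!x)" "\<beta> \<in> hom T w (Y!y)"
       "fst f x = fst g y" "cmp T (snd f x) \<alpha> = cmp T (snd g y) \<beta>" for w x y \<alpha> \<beta>
  proof -
    obtain j v where j: "j < length P" "v \<in> hom T w (P!j)" "fst p j = x" "cmp T (snd p j) v = \<alpha>"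
      "fst q j = y" "cmp T (snd q j) v = \<beta>" using ex[OF hyps] by blast
    show ?thesis
    proof (cases "j = l")
      case True
      have v: "v \<in> hom T w (P!l)" using j True by simp
      have v2: "cmp T u' v \<in> hom T w (P2!l)" using comp_hom[OF cat v u'] P2l by simp
      have "tr l (cmp T u' v) = v" unfolding tr_def
        using assoc[OF cat v u' u] uu' idl[OF cat v] by simp
      then show ?thesis using tr[OF l v2] j True len v2 by (intro exI[of _ l]) (auto simp: p2_def q2_def)
    next
      case False
      have v2: "v \<in> hom T w (P2!j)" using j False P2i by simp
      show ?thesis using tr[OF j(1) v2] j False len v2 unfolding tr_def
        by (intro exI[of _ j]) (auto simp: p2_def q2_def)
    qed
  qed
  have un2: "j = j' \<and> v = v'"
    if "j < length P2" "j' < length P2" "v \<in> hom T w (P2!j)" "v' \<in> hom T w (P2!j')"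
       "fst p2 j = fst p2 j'" "fst q2 j = fst q2 j'" "cmp T (snd p2 j) v = cmp T (snd p2 j') v'"
        "cmp T (snd q2 j) v = cmp T (snd q2 j') v'" for w j j' v v'
  proof -
    have A: "tr j v \<in> hom T w (P!j)" "cmp T (snd p2 j) v = cmp T (snd p j) (tr j v)"
       "cmp T (snd q2 j) v = cmp T (snd q j) (tr j v)" using tr that len by auto
    have B: "tr j' v' \<in> hom T w (P!j')" "cmp T (snd p2 j') v' = cmp T (snd p j') (tr j' v')"
       "cmp T (snd q2 j') v' = cmp T (snd q j') (tr j' v')" using tr that len by auto
    have jj: "j = j' \<and> tr j v = tr j' v'"
      apply (rule un[OF _ _ A(1) B(1)]) using that len A B by (auto simp: p2_def q2_def)
    show ?thesis
    proof (cases "j = l")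
      case True
      have v: "v \<in> hom T w V'" "v' \<in> hom T w V'" using that True jj P2l by auto
      have "cmp T u v = cmp T u v'" using jj True unfolding tr_def by simp
      then have "cmp T u' (cmp T u v) = cmp T u' (cmp T u v')" by simp
      then show ?thesis using assoc[OF cat v(1) u u'] assoc[OF cat v(2) u u'] uu idl[OF cat v(1)] idl[OF cat v(2)]
        jj by simp
    next
      case False then show ?thesis using jj unfolding tr_def by auto
    qed
  qed
  show ?thesis unfolding pb_el_def P2_def[symmetric] p2_def[symmetric] q2_def[symmetric]
    using hf hg hp2 hq2 comm2 ex2 un2 by blast
qed

lemma restr_make:
  assumes cat: "category T" and pb: "is_F_pullback T X Y Z f g P p q" and l: "l < length P"
    and inv: "invp T u u' V' (P!l)"
  shows "\<exists>P2 p2 q2 m. is_F_pullback T X Y Z f g P2 p2 q2 \<and> F_hom T [V'] P2 m \<and>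
     F_eq [V'] (F_comp T p2 m) (\<lambda>_. fst p l, \<lambda>_. cmp T (snd p l) u) \<and>
     F_eq [V'] (F_comp T q2 m) (\<lambda>_. fst q l, \<lambda>_. cmp T (snd q l) u) \<and>
     F_summand_incl T [V'] P2 m"
proof -
  have el: "pb_el T X Y Z f g P p q" using pb_to_el[OF cat pb] .
  define P2 where "P2 = P[l:=V']"
  define p2 where "p2 = (fst p, (snd p)(l := cmp T (snd p l) u))"
  define q2 where "q2 = (fst q, (snd q)(l := cmp T (snd q l) u))"
  have el2: "pb_el T X Y Z f g P2 p2 q2" using replace_el[OF cat el l inv] unfolding P2_def p2_def q2_def .
  have pb2: "is_F_pullback T X Y Z f g P2 p2 q2" using el_to_pb[OF cat el2] .
  have u: "u \<in> hom T V' (P!l)" using inv unfolding invp_def by auto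
  have V': "V' \<in> ob T" using hom_ob[OF cat u] by blast
  have P2ob: "F_obj T P2" using el2 unfolding pb_el_def F_hom_def by blast
  have l2: "l < length P2" and P2l: "P2!l = V'" using l unfolding P2_def by auto
  have si: "F_summand_incl T [V'] P2 (\<lambda>_. l, \<lambda>_. idm T V')" using summand_at[OF cat P2ob l2] P2l by simp
  have hm: "F_hom T [V'] P2 (\<lambda>_. l, \<lambda>_. idm T V')" using si unfolding F_summand_incl_def by blast
  have hp: "F_hom T P X p" using pb unfolding is_F_pullback_def by blast
  have hq: "F_hom T P Y q" using pb unfolding is_F_pullback_def by blast
  have pl: "snd p l \<in> hom T (P!l) (X!(fst p l))" using F_homD[OF hp l] by auto
  have ql: "snd q l \<in> hom T (P!l) (Y!(fst q l))" using F_homD[OF hq l] by auto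
  have e1: "F_eq [V'] (F_comp T p2 (\<lambda>_. l, \<lambda>_. idm T V')) (\<lambda>_. fst p l, \<lambda>_. cmp T (snd p l) u)"
    unfolding F_eq_def F_comp_def p2_def using idr[OF cat comp_hom[OF cat u pl]] by simp
  have e2: "F_eq [V'] (F_comp T q2 (\<lambda>_. l, \<lambda>_. idm T V')) (\<lambda>_. fst q l, \<lambda>_. cmp T (snd q l) u)"
    unfolding F_eq_def F_comp_def q2_def using idr[OF cat comp_hom[OF cat u ql]] by simp
  show ?thesis using pb2 hm e1 e2 si by blast
qed

lemma restr_data:
  assumes cat: "category T" and si: "F_summand_incl T [V'] P m"
  shows "fst m 0 < length P \<and> (\<exists>u'. invp T (snd m 0) u' V' (P!(fst m 0)))"
proof -
  obtain zs h where zs: "F_obj T zs" and iso: "F_iso T ([V'] @ zs) P h"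
    and e: "F_eq [V'] m (F_comp T h (F_id T [V']))" using si unfolding F_summand_incl_def by blast
  define xs where "xs = [V'] @ zs"
  obtain m' where hh: "F_hom T xs P h" and hm': "F_hom T P xs m'"
     and e1: "F_eq xs (F_comp T m' h) (F_id T xs)" and e2: "F_eq P (F_comp T h m') (F_id T P)"
    using iso unfolding F_iso_def xs_def by blast
  have h0: "fst h 0 < length P" "snd h 0 \<in> hom T V' (P!(fst h 0))" using F_homD[OF hh, of 0] unfolding xs_def by auto
  have m0: "fst m 0 = fst h 0" "snd m 0 = snd h 0" using e idr[OF cat h0(2)] by (auto simp: F_eq_def F_comp_def F_id_def)
  define j where "j = fst h 0"
  have mj: "fst m' j < length xs" "snd m' j \<in> hom T (P!j) (xs!(fst m' j))" using F_homD[OF hm' h0(1)] unfolding j_def by auto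
  have a: "fst m' j = 0" "cmp T (snd m' j) (snd h 0) = idm T V'" using e1 unfolding j_def xs_def
    by (auto simp: F_eq_def F_comp_def F_id_def)
  have b: "cmp T (snd h 0) (snd m' j) = idm T (P!j)" using e2 h0(1) a(1) unfolding j_def
    by (auto simp: F_eq_def F_comp_def F_id_def)
  have "invp T (snd m 0) (snd m' j) V' (P!(fst m 0))"
    unfolding invp_def using m0 h0 mj a b unfolding j_def xs_def by auto
  then show ?thesis using m0 h0 by metis
qed

lemma invp_sym: "invp T u u' A B \<Longrightarrow> invp T u' u B A"
  unfolding invp_def by auto

lemma TS_restr_use:
  assumes cat: "category T" and R: "transfer_system T R" and aR: "a \<in> R"
    and a: "a \<in> hom T V U" and c: "c \<in> hom T U' U"
    and pb: "is_F_pullback T [V] [U'] [U] (single a) (single c) P p q"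
    and l: "l < length P" and inv: "invp T u u' V' (P!l)"
  shows "cmp T (snd q l) u \<in> R"
proof -
  obtain P2 p2 q2 m where A: "is_F_pullback T [V] [U'] [U] (single a) (single c) P2 p2 q2" "F_hom T [V'] P2 m"
     "F_eq [V'] (F_comp T p2 m) (\<lambda>_. fst p l, \<lambda>_. cmp T (snd p l) u)"
     "F_eq [V'] (F_comp T q2 m) (\<lambda>_. fst q l, \<lambda>_. cmp T (snd q l) u)"
     "F_summand_incl T [V'] P2 m" using restr_make[OF cat pb l inv] by blast
  have hp: "F_hom T P [V] p" and hq: "F_hom T P [U'] q" and comm: "F_eq P (F_comp T (single a) p) (F_comp T (single c) q)"
    using pb unfolding is_F_pullback_def by blast+
  have pl: "fst p l = 0" "snd p l \<in> hom T (P!l) V" using F_homD[OF hp l] by auto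
  have ql: "fst q l = 0" "snd q l \<in> hom T (P!l) U'" using F_homD[OF hq l] by auto
  have u: "u \<in> hom T V' (P!l)" using inv unfolding invp_def by auto
  have sq: "cmp T a (snd p l) = cmp T c (snd q l)" using comm l by (auto simp: F_eq_def F_comp_def single_def)
  have b: "cmp T (snd p l) u \<in> hom T V' V" using comp_hom[OF cat u pl(2)] .
  have a': "cmp T (snd q l) u \<in> hom T V' U'" using comp_hom[OF cat u ql(2)] .
  have sq2: "cmp T a (cmp T (snd p l) u) = cmp T c (cmp T (snd q l) u)"
    using assoc[OF cat u pl(2) a] assoc[OF cat u ql(2) c] sq by simp
  have e1: "F_eq [V'] (F_comp T p2 m) (single (cmp T (snd p l) u))"
    using A(3) pl(1) by (simp add: F_eq_def single_def)
  have e2: "F_eq [V'] (F_comp T q2 m) (single (cmp T (snd q l) u))"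
    using A(4) ql(1) by (simp add: F_eq_def single_def)
  have clause: "\<forall>V' V U' U b a' a c.
        b \<in> hom T V' V \<longrightarrow> a' \<in> hom T V' U' \<longrightarrow> a \<in> hom T V U \<longrightarrow> c \<in> hom T U' U \<longrightarrow>
        cmp T a b = cmp T c a' \<longrightarrow> a \<in> R \<longrightarrow>
        (\<exists>P p q m. is_F_pullback T [V] [U'] [U] (single a) (single c) P p q \<and>
           F_hom T [V'] P m \<and> F_eq [V'] (F_comp T p m) (single b) \<and>
           F_eq [V'] (F_comp T q m) (single a') \<and> F_summand_incl T [V'] P m) \<longrightarrow>
        a' \<in> R" using R unfolding transfer_system_def by blast
  show ?thesis using clause[rule_format, OF b a' a c sq2 aR] A(1,2,5) e1 e2 by blast
qed

lemma TS_restr_intro: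
  assumes cat: "category T"
    and H: "\<And>a V U c U' P p q l u u' V'. a \<in> R \<Longrightarrow> a \<in> hom T V U \<Longrightarrow> c \<in> hom T U' U \<Longrightarrow>
      is_F_pullback T [V] [U'] [U] (single a) (single c) P p q \<Longrightarrow> l < length P \<Longrightarrow>
      invp T u u' V' (P!l) \<Longrightarrow> cmp T (snd q l) u \<in> R"
  shows "\<forall>V' V U' U b a' a c.
        b \<in> hom T V' V \<longrightarrow> a' \<in> hom T V' U' \<longrightarrow> a \<in> hom T V U \<longrightarrow> c \<in> hom T U' U \<longrightarrow>
        cmp T a b = cmp T c a' \<longrightarrow> a \<in> R \<longrightarrow>
        (\<exists>P p q m. is_F_pullback T [V] [U'] [U] (single a) (single c) P p q \<and>
           F_hom T [V'] P m \<and> F_eq [V'] (F_comp T p m) (single b) \<and>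
           F_eq [V'] (F_comp T q m) (single a') \<and> F_summand_incl T [V'] P m) \<longrightarrow>
        a' \<in> R"
proof (intro allI impI)
  fix V' V U' U b a' a c
  assume a: "a \<in> hom T V U" and c: "c \<in> hom T U' U" and aR: "a \<in> R"
    and ex: "\<exists>P p q m. is_F_pullback T [V] [U'] [U] (single a) (single c) P p q \<and>
           F_hom T [V'] P m \<and> F_eq [V'] (F_comp T p m) (single b) \<and>
           F_eq [V'] (F_comp T q m) (single a') \<and> F_summand_incl T [V'] P m"
  then obtain P p q m where pb: "is_F_pullback T [V] [U'] [U] (single a) (single c) P p q"
     and e2: "F_eq [V'] (F_comp T q m) (single a')" and si: "F_summand_incl T [V'] P m" by blast
  obtain u' where l: "fst m 0 < length P" and inv: "invp T (snd m 0) u' V' (P!(fst m 0))"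
    using restr_data[OF cat si] by blast
  have "a' = cmp T (snd q (fst m 0)) (snd m 0)" using e2 by (simp add: F_eq_def F_comp_def single_def)
  then show "a' \<in> R" using H[OF aR a c pb l inv] by simp
qed

lemma S_iso_single:
  assumes cat: "category T" and x: "x \<in> hom T A V" and y: "y \<in> hom T B V" and inv: "invp T k k' A B"
    and e1: "cmp T y k = x" and e2: "cmp T x k' = y"
  shows "S_iso T V [x] [y] (\<lambda>_. 0, \<lambda>_. k)"
proof -
  have k: "k \<in> hom T A B" "k' \<in> hom T B A" "cmp T k' k = idm T A" "cmp T k k' = idm T B"
    using inv unfolding invp_def by auto
  have V: "V \<in> ob T" "A \<in> ob T" "B \<in> ob T" using hom_ob[OF cat x] hom_ob[OF cat y] by auto
  have dx: "dm T x = A" "cd T x = V" "x \<in> mr T" using x by (auto simp: hom_def)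
  have dy: "dm T y = B" "cd T y = V" "y \<in> mr T" using y by (auto simp: hom_def)
  have s1: "S_hom T V [x] [y] (\<lambda>_. 0, \<lambda>_. k)"
    unfolding S_hom_def S_obj_def F_hom_def F_obj_def using V dx dy k e1 by auto
  have s2: "S_hom T V [y] [x] (\<lambda>_. 0, \<lambda>_. k')"
    unfolding S_hom_def S_obj_def F_hom_def F_obj_def using V dx dy k e2 by auto
  show ?thesis unfolding S_iso_def using s1 s2 k dx dy
    by (intro conjI exI[of _ "(\<lambda>_. 0, \<lambda>_. k')"]) (auto simp: F_eq_def F_comp_def F_id_def)
qed

lemma pb_cong_f:
  assumes cat: "category T" and e: "F_eq X f f'" and pb: "is_F_pullback T X Y Z f g P p q"
  shows "is_F_pullback T X Y Z f' g P p q"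
proof -
  have el: "pb_el T X Y Z f g P p q" using pb_to_el[OF cat pb] .
  have hp: "F_hom T P X p" using el unfolding pb_el_def by blast
  have A: "F_hom T X Z f' = F_hom T X Z f" using e by (auto simp: F_hom_def F_eq_def)
  have B: "F_eq P (F_comp T f' p) (F_comp T g q) = F_eq P (F_comp T f p) (F_comp T g q)"
    using e hp by (auto simp: F_hom_def F_eq_def F_comp_def)
  have e': "\<And>x. x < length X \<Longrightarrow> fst f' x = fst f x \<and> snd f' x = snd f x" using e unfolding F_eq_def by auto
  have ex: "\<forall>w x y \<alpha> \<beta>. w \<in> ob T \<longrightarrow> x < length X \<longrightarrow> y < length Y \<longrightarrow> \<alpha> \<in> hom T w (X!x) \<longrightarrow>
        \<beta> \<in> hom T w (Y!y) \<longrightarrow> fst f x = fst g y \<longrightarrow> cmp T (snd f x) \<alpha> = cmp T (snd g y) \<beta> \<longrightarrow>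
        (\<exists>j<length P. \<exists>u\<in>hom T w (P!j). fst p j = x \<and> cmp T (snd p j) u = \<alpha> \<and>
            fst q j = y \<and> cmp T (snd q j) u = \<beta>)" using el unfolding pb_el_def by blast
  have ex': "\<forall>w x y \<alpha> \<beta>. w \<in> ob T \<longrightarrow> x < length X \<longrightarrow> y < length Y \<longrightarrow> \<alpha> \<in> hom T w (X!x) \<longrightarrow>
        \<beta> \<in> hom T w (Y!y) \<longrightarrow> fst f' x = fst g y \<longrightarrow> cmp T (snd f' x) \<alpha> = cmp T (snd g y) \<beta> \<longrightarrow>
        (\<exists>j<length P. \<exists>u\<in>hom T w (P!j). fst p j = x \<and> cmp T (snd p j) u = \<alpha> \<and>
            fst q j = y \<and> cmp T (snd q j) u = \<beta>)"
  proof (intro allI impI)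
    fix w x y \<alpha> \<beta>
    assume h: "w \<in> ob T" "x < length X" "y < length Y" "\<alpha> \<in> hom T w (X!x)"
        "\<beta> \<in> hom T w (Y!y)" "fst f' x = fst g y" "cmp T (snd f' x) \<alpha> = cmp T (snd g y) \<beta>"
    then show "\<exists>j<length P. \<exists>u\<in>hom T w (P!j). fst p j = x \<and> cmp T (snd p j) u = \<alpha> \<and>
            fst q j = y \<and> cmp T (snd q j) u = \<beta>" using ex e'[OF h(2)] by simp
  qed
  have "pb_el T X Y Z f' g P p q" using el ex' unfolding pb_el_def A B by blast
  then show ?thesis using el_to_pb[OF cat] by blast
qed

lemma unital_facts:
  assumes U: "unital_wis T C"
  shows unital_sub: "V \<in> ob T \<Longrightarrow> S \<in> C V \<Longrightarrow> S_obj T V S"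
    and unital_iso: "V \<in> ob T \<Longrightarrow> S \<in> C V \<Longrightarrow> S_iso T V S S' m \<Longrightarrow> S' \<in> C V"
    and unital_res: "a \<in> hom T U V \<Longrightarrow> S \<in> C V \<Longrightarrow>
        is_F_pullback T (map (dm T) S) [U] [V] (S_struct S) (single a) P p q \<Longrightarrow>
        map (snd q) [0..<length P] \<in> C U"
    and unital_unit: "V \<in> ob T \<Longrightarrow> [idm T V] \<in> C V"
    and unital_coprod: "V \<in> ob T \<Longrightarrow> S \<in> C V \<Longrightarrow> (\<And>i. i<length S \<Longrightarrow> Ts i \<in> C (dm T (S!i))) \<Longrightarrow> S_coprod T S Ts \<in> C V"
    and unital_split: "V \<in> ob T \<Longrightarrow> S @ S' \<in> C V \<Longrightarrow> S \<in> C V \<and> S' \<in> C V"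
proof -
  have w: "weak_indexing_system T C" and sp: "\<forall>V\<in>ob T. C V \<noteq> {} \<and> (\<forall>S S'. S @ S' \<in> C V \<longrightarrow> S \<in> C V \<and> S' \<in> C V)"
    using U[unfolded unital_wis_def] by (rule conjunct1, rule conjunct2)
  have f: "full_T_subcat T C" and un: "\<forall>V\<in>ob T. C V \<noteq> {} \<longrightarrow> [idm T V] \<in> C V"
    and cp: "\<forall>V\<in>ob T. \<forall>S\<in>C V. \<forall>Ts. (\<forall>i<length S. Ts i \<in> C (dm T (S!i))) \<longrightarrow> S_coprod T S Ts \<in> C V"
    using w[unfolded weak_indexing_system_def] by (rule conjunct1, rule conjunct1[OF conjunct2], rule conjunct2[OF conjunct2])
  have f1: "\<forall>V\<in>ob T. C V \<subseteq> {S. S_obj T V S}" and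
     f2: "\<forall>V\<in>ob T. \<forall>S\<in>C V. \<forall>S' m. S_iso T V S S' m \<longrightarrow> S' \<in> C V" and
     f3: "\<forall>U V a S P p q. a \<in> hom T U V \<longrightarrow> S \<in> C V \<longrightarrow>
        is_F_pullback T (map (dm T) S) [U] [V] (S_struct S) (single a) P p q \<longrightarrow>
        map (snd q) [0..<length P] \<in> C U"
    using f[unfolded full_T_subcat_def] by (rule conjunct1, rule conjunct1[OF conjunct2], rule conjunct2[OF conjunct2])
  show "V \<in> ob T \<Longrightarrow> S \<in> C V \<Longrightarrow> S_obj T V S" using f1 by blast
  show "V \<in> ob T \<Longrightarrow> S \<in> C V \<Longrightarrow> S_iso T V S S' m \<Longrightarrow> S' \<in> C V" using f2 by blast
  show "a \<in> hom T U V \<Longrightarrow> S \<in> C V \<Longrightarrow>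
        is_F_pullback T (map (dm T) S) [U] [V] (S_struct S) (single a) P p q \<Longrightarrow>
        map (snd q) [0..<length P] \<in> C U" using f3 by blast
  show "V \<in> ob T \<Longrightarrow> [idm T V] \<in> C V" using un sp by blast
  show "V \<in> ob T \<Longrightarrow> S \<in> C V \<Longrightarrow> (\<And>i. i<length S \<Longrightarrow> Ts i \<in> C (dm T (S!i))) \<Longrightarrow> S_coprod T S Ts \<in> C V"
    using cp by blast
  show "V \<in> ob T \<Longrightarrow> S @ S' \<in> C V \<Longrightarrow> S \<in> C V \<and> S' \<in> C V" using sp by blast
qed

lemma unital_elem:
  assumes "unital_wis T C" "V \<in> ob T" "S \<in> C V" "x \<in> set S"
  shows "[x] \<in> C V"
proof -
  obtain xs ys where "S = xs @ x # ys" using assms(4) by (meson split_list)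
  then have "xs @ (x # ys) \<in> C V" using assms(3) by simp
  then have "(x # ys) \<in> C V" using unital_split[OF assms(1,2), of xs "x # ys"] by blast
  then have "[x] @ ys \<in> C V" by simp
  then show ?thesis using unital_split[OF assms(1,2), of "[x]" ys] by blast
qed

lemma frakR_TS:
  assumes cat: "category T" and U: "unital_wis T C"
  shows "transfer_system T (frakR T C)"
proof -
  have 1: "frakR T C \<subseteq> mr T" unfolding frakR_def by auto
  have 2: "f \<in> frakR T C" if hiso: "iso T f" for f
  proof -
    obtain g where f: "f \<in> mr T" and g: "g \<in> hom T (cd T f) (dm T f)" and
      gf: "cmp T g f = idm T (dm T f)" and fg: "cmp T f g = idm T (cd T f)"
      using hiso unfolding iso_def by blast
    define V where "V = cd T f"
    have fh: "f \<in> hom T (dm T f) V" using f unfolding hom_def V_def by auto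
    have V: "V \<in> ob T" using hom_ob[OF cat fh] by blast
    have "S_iso T V [idm T V] [f] (\<lambda>_. 0, \<lambda>_. g)"
      apply (rule S_iso_single[OF cat id_hom[OF cat V] fh])
      using g gf fg idl[OF cat fh] unfolding invp_def V_def by (auto simp: fh[unfolded V_def])
    then have "[f] \<in> C V" using unital_iso[OF U V unital_unit[OF U V]] by blast
    then show ?thesis unfolding frakR_def V_def using f by auto
  qed
  have 3: "cmp T g f \<in> frakR T C" if "f \<in> frakR T C" "g \<in> frakR T C" "cd T f = dm T g" for f g
  proof -
    have f: "f \<in> mr T" "[f] \<in> C (cd T f)" and g: "g \<in> mr T" "[g] \<in> C (cd T g)" using that unfolding frakR_def by auto
    have V: "cd T g \<in> ob T" using cat_dmcd[OF cat g(1)] by blast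
    have "S_coprod T [g] (\<lambda>_. [f]) \<in> C (cd T g)"
      using unital_coprod[OF U V g(2)] f that(3) by simp
    moreover have "S_coprod T [g] (\<lambda>_. [f]) = [cmp T g f]" by (simp add: S_coprod_def Ind_def)
    ultimately show ?thesis using cat_comp[OF cat f(1) g(1) that(3)] unfolding frakR_def by auto
  qed
  have 4: "cmp T (snd q l) u \<in> frakR T C"
    if H: "a \<in> frakR T C" "a \<in> hom T V U" "c \<in> hom T U' U"
      "is_F_pullback T [V] [U'] [U] (single a) (single c) P p q" "l < length P"
      "invp T u u' V' (P!l)" for a V U c U' P p q l u u' V'
  proof -
    have aC: "[a] \<in> C U" using H(1,2) unfolding frakR_def hom_def by auto
    have "F_eq [V] (single a) (S_struct [a])" by (simp add: F_eq_def single_def S_struct_def)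
    then have pb: "is_F_pullback T (map (dm T) [a]) [U'] [U] (S_struct [a]) (single c) P p q"
      using pb_cong_f[OF cat _ H(4)] H(2) by (auto simp: hom_def)
    define Q where "Q = map (snd q) [0..<length P]"
    have QC: "Q \<in> C U'" using unital_res[OF U H(3) aC pb] unfolding Q_def .
    have U': "U' \<in> ob T" using hom_ob[OF cat H(3)] by blast
    have "Q!l \<in> set Q" using H(5) unfolding Q_def by simp
    then have "[Q!l] \<in> C U'" using unital_elem[OF U U' QC] by blast
    then have qC: "[snd q l] \<in> C U'" using H(5) unfolding Q_def by simp
    have hq: "F_hom T P [U'] q" using H(4) unfolding is_F_pullback_def by blast
    have ql: "snd q l \<in> hom T (P!l) U'" using F_homD[OF hq H(5)] by auto
    have u: "u \<in> hom T V' (P!l)" "u' \<in> hom T (P!l) V'" "cmp T u u' = idm T (P!l)"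
      using H(6) unfolding invp_def by auto
    have qu: "cmp T (snd q l) u \<in> hom T V' U'" using comp_hom[OF cat u(1) ql] .
    have "S_iso T U' [snd q l] [cmp T (snd q l) u] (\<lambda>_. 0, \<lambda>_. u')"
      apply (rule S_iso_single[OF cat ql qu invp_sym[OF H(6)]])
      using assoc[OF cat u(2) u(1) ql] u(3) idr[OF cat ql] by auto
    then have "[cmp T (snd q l) u] \<in> C U'" using unital_iso[OF U U' qC] by blast
    then show ?thesis using qu unfolding frakR_def hom_def by auto
  qed
  have 5: "\<forall>V' V U' U b a' a c.
        b \<in> hom T V' V \<longrightarrow> a' \<in> hom T V' U' \<longrightarrow> a \<in> hom T V U \<longrightarrow> c \<in> hom T U' U \<longrightarrow>
        cmp T a b = cmp T c a' \<longrightarrow> a \<in> frakR T C \<longrightarrow>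
        (\<exists>P p q m. is_F_pullback T [V] [U'] [U] (single a) (single c) P p q \<and>
           F_hom T [V'] P m \<and> F_eq [V'] (F_comp T p m) (single b) \<and>
           F_eq [V'] (F_comp T q m) (single a') \<and> F_summand_incl T [V'] P m) \<longrightarrow>
        a' \<in> frakR T C"
    by (rule TS_restr_intro[OF cat]) (rule 4; assumption)
  show ?thesis unfolding transfer_system_def
    using 1 2 3 5 by blast
qed

lemma TS_facts:
  assumes "transfer_system T R"
  shows TS_mr: "R \<subseteq> mr T" and TS_iso: "iso T f \<Longrightarrow> f \<in> R"
    and TS_comp: "f \<in> R \<Longrightarrow> g \<in> R \<Longrightarrow> cd T f = dm T g \<Longrightarrow> cmp T g f \<in> R"
  using assms unfolding transfer_system_def by blast+

lemma invp_iso: "invp T u u' A B \<Longrightarrow> iso T u"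
  unfolding invp_def iso_def hom_def by auto

lemma id_iso: "category T \<Longrightarrow> V \<in> ob T \<Longrightarrow> iso T (idm T V)"
  using id_hom[of T V] idl[of T "idm T V" V V] unfolding iso_def hom_def by auto

definition Ival :: "('o,'m) cat \<Rightarrow> 'm set \<Rightarrow> ('o,'m) tsub" where
  "Ival T R = (\<lambda>V. {S. S_obj T V S \<and> set S \<subseteq> R})"

lemma orbital_pb:
  assumes "orbital T" "F_hom T X Z f" "F_hom T Y Z g"
  obtains P p q where "is_F_pullback T X Y Z f g P p q"
  using assms unfolding orbital_def by blast

lemma Ival_res:
  assumes orb: "orbital T" and R: "transfer_system T R" and a: "a \<in> hom T U V" and S: "S \<in> Ival T R V"
    and pb: "is_F_pullback T (map (dm T) S) [U] [V] (S_struct S) (single a) P p q"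
  shows "map (snd q) [0..<length P] \<in> Ival T R U"
proof -
  have cat: "category T" using orb unfolding orbital_def by blast
  have el: "pb_el T (map (dm T) S) [U] [V] (S_struct S) (single a) P p q" using pb_to_el[OF cat pb] .
  have hp: "F_hom T P (map (dm T) S) p" and hq: "F_hom T P [U] q"
    and comm: "F_eq P (F_comp T (S_struct S) p) (F_comp T (single a) q)"
    and exP: "\<And>w x y \<alpha> \<beta>. w \<in> ob T \<Longrightarrow> x < length (map (dm T) S) \<Longrightarrow> y < length [U] \<Longrightarrow> \<alpha> \<in> hom T w ((map (dm T) S)!x) \<Longrightarrow>
        \<beta> \<in> hom T w ([U]!y) \<Longrightarrow> fst (S_struct S) x = fst (single a) y \<Longrightarrow> cmp T (snd (S_struct S) x) \<alpha> = cmp T (snd (single a) y) \<beta> \<Longrightarrow>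
        (\<exists>j<length P. \<exists>u\<in>hom T w (P!j). fst p j = x \<and> cmp T (snd p j) u = \<alpha> \<and>
            fst q j = y \<and> cmp T (snd q j) u = \<beta>)"
    and unP: "\<And>w j j' u u'. j < length P \<Longrightarrow> j' < length P \<Longrightarrow> u \<in> hom T w (P!j) \<Longrightarrow> u' \<in> hom T w (P!j') \<Longrightarrow>
        fst p j = fst p j' \<Longrightarrow> fst q j = fst q j' \<Longrightarrow> cmp T (snd p j) u = cmp T (snd p j') u' \<Longrightarrow>
        cmp T (snd q j) u = cmp T (snd q j') u' \<Longrightarrow> j = j' \<and> u = u'"
    using el unfolding pb_el_def by blast+
  have Sobj: "S_obj T V S" and SR: "set S \<subseteq> R" using S unfolding Ival_def by auto
  have U: "U \<in> ob T" using hom_ob[OF cat a] by blast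
  have qi: "fst q i = 0 \<and> snd q i \<in> hom T (P!i) U" if "i < length P" for i using F_homD[OF hq that] by auto
  have inR: "snd q i \<in> R" if i: "i < length P" for i
  proof -
    define k where "k = fst p i"
    have k: "k < length S" "snd p i \<in> hom T (P!i) (dm T (S!k))" using F_homD[OF hp i] unfolding k_def by auto
    have Sk: "S!k \<in> hom T (dm T (S!k)) V" using Sobj k(1) unfolding S_obj_def hom_def by auto
    have SkR: "S!k \<in> R" using SR k(1) by auto
    have q: "fst q i = 0" "snd q i \<in> hom T (P!i) U" using qi[OF i] by auto
    have sq: "cmp T (S!k) (snd p i) = cmp T a (snd q i)" using comm i unfolding k_def
      by (auto simp: F_eq_def F_comp_def single_def S_struct_def)
    obtain P1 p1 q1 where pb1: "is_F_pullback T [dm T (S!k)] [U] [V] (single (S!k)) (single a) P1 p1 q1"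
      using orbital_pb[OF orb F_hom_single[OF cat Sk] F_hom_single[OF cat a]] by blast
    have el1: "pb_el T [dm T (S!k)] [U] [V] (single (S!k)) (single a) P1 p1 q1" using pb_to_el[OF cat pb1] .
    have hp1: "F_hom T P1 [dm T (S!k)] p1" and hq1: "F_hom T P1 [U] q1"
      and comm1: "F_eq P1 (F_comp T (single (S!k)) p1) (F_comp T (single a) q1)"
      and ex1: "\<And>w x y \<alpha> \<beta>. w \<in> ob T \<Longrightarrow> x < length [dm T (S!k)] \<Longrightarrow> y < length [U] \<Longrightarrow> \<alpha> \<in> hom T w ([dm T (S!k)]!x) \<Longrightarrow>
        \<beta> \<in> hom T w ([U]!y) \<Longrightarrow> fst (single (S!k)) x = fst (single a) y \<Longrightarrow> cmp T (snd (single (S!k)) x) \<alpha> = cmp T (snd (single a) y) \<beta> \<Longrightarrow>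
        (\<exists>j<length P1. \<exists>u\<in>hom T w (P1!j). fst p1 j = x \<and> cmp T (snd p1 j) u = \<alpha> \<and>
            fst q1 j = y \<and> cmp T (snd q1 j) u = \<beta>)"
      and un1: "\<And>w j j' u u'. j < length P1 \<Longrightarrow> j' < length P1 \<Longrightarrow> u \<in> hom T w (P1!j) \<Longrightarrow> u' \<in> hom T w (P1!j') \<Longrightarrow>
        fst p1 j = fst p1 j' \<Longrightarrow> fst q1 j = fst q1 j' \<Longrightarrow> cmp T (snd p1 j) u = cmp T (snd p1 j') u' \<Longrightarrow>
        cmp T (snd q1 j) u = cmp T (snd q1 j') u' \<Longrightarrow> j = j' \<and> u = u'"
      using el1 unfolding pb_el_def by blast+
    have Pi: "P!i \<in> ob T" using hom_ob[OF cat k(2)] by blast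
    obtain l u where l: "l < length P1" "u \<in> hom T (P!i) (P1!l)" "fst p1 l = 0" "cmp T (snd p1 l) u = snd p i"
       "fst q1 l = 0" "cmp T (snd q1 l) u = snd q i"
      using ex1[of "P!i" 0 0 "snd p i" "snd q i"] Pi k(2) q sq by (auto simp: single_def)
    have p1l: "snd p1 l \<in> hom T (P1!l) (dm T (S!k))" using F_homD[OF hp1 l(1)] l(3) by simp
    have q1l: "snd q1 l \<in> hom T (P1!l) U" using F_homD[OF hq1 l(1)] l(5) by simp
    have sq1: "cmp T (S!k) (snd p1 l) = cmp T a (snd q1 l)" using comm1 l(1,3,5)
      by (auto simp: F_eq_def F_comp_def single_def)
    have P1l: "P1!l \<in> ob T" using hom_ob[OF cat p1l] by blast
    obtain r v where r: "r < length P" "v \<in> hom T (P1!l) (P!r)" "fst p r = k" "cmp T (snd p r) v = snd p1 l"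
       "fst q r = 0" "cmp T (snd q r) v = snd q1 l"
      using exP[of "P1!l" k 0 "snd p1 l" "snd q1 l"] P1l k(1) p1l q1l sq1
      by (auto simp: single_def S_struct_def)
    have pr: "snd p r \<in> hom T (P!r) (dm T (S!k))" using F_homD[OF hp r(1)] r(3) k(1) by simp
    have qr: "snd q r \<in> hom T (P!r) U" using qi[OF r(1)] by simp
    have vu: "cmp T v u \<in> hom T (P!i) (P!r)" using comp_hom[OF cat l(2) r(2)] .
    have "r = i \<and> cmp T v u = idm T (P!i)"
      apply (rule unP[OF r(1) i vu id_hom[OF cat Pi]])
      using r(3,5) q(1) k_def assoc[OF cat l(2) r(2) pr] assoc[OF cat l(2) r(2) qr] r(4,6) l(4,6)
        idr[OF cat k(2)] idr[OF cat q(2)] by auto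
    then have ri: "r = i" and vu1: "cmp T v u = idm T (P!i)" by auto
    have uv: "cmp T u v \<in> hom T (P1!l) (P1!l)" using comp_hom[OF cat r(2)[unfolded ri] l(2)] .
    have "l = l \<and> cmp T u v = idm T (P1!l)"
      apply (rule un1[OF l(1) l(1) uv id_hom[OF cat P1l]])
      using assoc[OF cat r(2)[unfolded ri] l(2) p1l] assoc[OF cat r(2)[unfolded ri] l(2) q1l] l(4,6) r(4,6) ri
        idr[OF cat p1l] idr[OF cat q1l] by auto
    then have inv: "invp T u v (P!i) (P1!l)" unfolding invp_def using l(2) r(2) ri vu1 by auto
    have "cmp T (snd q1 l) u \<in> R" using TS_restr_use[OF cat R SkR Sk a pb1 l(1) inv] .
    then show ?thesis using l(6) by simp
  qed
  show ?thesis unfolding Ival_def S_obj_def using U qi inR by (auto simp: hom_def)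
qed

lemma Ival_wis:
  assumes orb: "orbital T" and R: "transfer_system T R"
  shows "weak_indexing_system T (Ival T R)"
proof -
  have cat: "category T" using orb unfolding orbital_def by blast
  have 1: "\<forall>V\<in>ob T. Ival T R V \<subseteq> {S. S_obj T V S}" unfolding Ival_def by auto
  have 2: "S' \<in> Ival T R V" if S: "S \<in> Ival T R V" and iso: "S_iso T V S S' m" for V S S' m
  proof -
    obtain m' where h: "S_hom T V S S' m" and h': "S_hom T V S' S m'"
      and e1: "F_eq (map (dm T) S) (F_comp T m' m) (F_id T (map (dm T) S))"
      and e2: "F_eq (map (dm T) S') (F_comp T m m') (F_id T (map (dm T) S'))"
      using iso unfolding S_iso_def by blast
    have S'obj: "S_obj T V S'" using h unfolding S_hom_def by blast
    have SR: "set S \<subseteq> R" using S unfolding Ival_def by auto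
    have hm: "F_hom T (map (dm T) S) (map (dm T) S') m" using h unfolding S_hom_def by blast
    have hm': "F_hom T (map (dm T) S') (map (dm T) S) m'" and tri: "\<forall>i<length S'. cmp T (S!(fst m' i)) (snd m' i) = S'!i"
      using h' unfolding S_hom_def by blast+
    have "S'!j \<in> R" if j: "j < length S'" for j
    proof -
      define i where "i = fst m' j"
      have i: "i < length S" "snd m' j \<in> hom T (dm T (S'!j)) (dm T (S!i))" using F_homD[OF hm', of j] j unfolding i_def by auto
      have mi: "fst m i < length S'" "snd m i \<in> hom T (dm T (S!i)) (dm T (S'!(fst m i)))" using F_homD[OF hm, of i] i(1) by auto
      have a1: "fst m i = j" "cmp T (snd m i) (snd m' j) = idm T (dm T (S'!j))"
        using e2 j unfolding i_def by (auto simp: F_eq_def F_comp_def F_id_def)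
      have a2: "cmp T (snd m' j) (snd m i) = idm T (dm T (S!i))"
        using e1 i(1) a1(1) by (auto simp: F_eq_def F_comp_def F_id_def)
      have "iso T (snd m' j)" unfolding iso_def using i(2) mi(2) a1 a2 by (auto simp: hom_def)
      then have "snd m' j \<in> R" using TS_iso[OF R] by blast
      moreover have "S!i \<in> R" using SR i(1) by auto
      moreover have "cd T (snd m' j) = dm T (S!i)" using i(2) by (simp add: hom_def)
      ultimately have "cmp T (S!i) (snd m' j) \<in> R" using TS_comp[OF R] by blast
      then show ?thesis using tri j unfolding i_def by simp
    qed
    then show ?thesis using S'obj unfolding Ival_def by (auto simp: in_set_conv_nth)
  qed
  have 3: "[idm T V] \<in> Ival T R V" if V: "V \<in> ob T" for V
    using TS_iso[OF R id_iso[OF cat V]] cat_id[OF cat V] V unfolding Ival_def S_obj_def by auto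
  have 4: "S_coprod T S Ts \<in> Ival T R V"
    if V: "V \<in> ob T" and S: "S \<in> Ival T R V" and Ts: "\<forall>i<length S. Ts i \<in> Ival T R (dm T (S!i))" for V S Ts
  proof -
    have Sobj: "S_obj T V S" and SR: "set S \<subseteq> R" using S unfolding Ival_def by auto
    have "x \<in> mr T \<and> cd T x = V \<and> x \<in> R" if x: "x \<in> set (S_coprod T S Ts)" for x
    proof -
      obtain i t where i: "i < length S" "t \<in> set (Ts i)" "x = cmp T (S!i) t"
        using x unfolding S_coprod_def Ind_def by auto
      have t: "t \<in> mr T" "cd T t = dm T (S!i)" "t \<in> R" using Ts i(1,2) unfolding Ival_def S_obj_def by auto
      have Si: "S!i \<in> mr T" "cd T (S!i) = V" "S!i \<in> R" using Sobj SR i(1) unfolding S_obj_def by auto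
      show ?thesis using cat_comp[OF cat t(1) Si(1) t(2)] TS_comp[OF R t(3) Si(3) t(2)] Si i(3) by auto
    qed
    then show ?thesis using V unfolding Ival_def S_obj_def by auto
  qed
  have 5: "\<forall>U V a S P p q. a \<in> hom T U V \<longrightarrow> S \<in> Ival T R V \<longrightarrow>
        is_F_pullback T (map (dm T) S) [U] [V] (S_struct S) (single a) P p q \<longrightarrow>
        map (snd q) [0..<length P] \<in> Ival T R U" using Ival_res[OF orb R] by blast
  have "full_T_subcat T (Ival T R)" unfolding full_T_subcat_def using 1 2 5 by blast
  then show ?thesis unfolding weak_indexing_system_def using 3 4 by blast
qed

lemma C_sub_Ival:
  assumes U: "unital_wis T C" and sub: "frakR T C \<subseteq> R" and V: "V \<in> ob T"
  shows "C V \<subseteq> Ival T R V"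
proof
  fix S assume S: "S \<in> C V"
  have Sobj: "S_obj T V S" using unital_sub[OF U V S] .
  have "x \<in> R" if x: "x \<in> set S" for x
  proof -
    have "[x] \<in> C V" using unital_elem[OF U V S x] .
    moreover have "x \<in> mr T" "cd T x = V" using Sobj x unfolding S_obj_def by auto
    ultimately show ?thesis using sub unfolding frakR_def by auto
  qed
  then show "S \<in> Ival T R V" using Sobj unfolding Ival_def by auto
qed

lemma dirA:
  assumes orb: "orbital T" and UC: "unital_wis T C" and UD: "unital_wis T D"
    and R: "transfer_system T R" and sub: "frakR T C \<union> frakR T D \<subseteq> R"
  shows "frakR T (wis_join T C D) \<subseteq> R"
proof
  fix a assume a: "a \<in> frakR T (wis_join T C D)"
  have cat: "category T" using orb unfolding orbital_def by blast
  have am: "a \<in> mr T" and aJ: "[a] \<in> wis_join T C D (cd T a)" using a unfolding frakR_def by auto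
  have V: "cd T a \<in> ob T" using cat_dmcd[OF cat am] by blast
  have W: "weak_indexing_system T (Ival T R)" using Ival_wis[OF orb R] .
  have "\<forall>W\<in>ob T. C W \<subseteq> Ival T R W \<and> D W \<subseteq> Ival T R W"
    using C_sub_Ival[OF UC] C_sub_Ival[OF UD] sub by blast
  then have "[a] \<in> Ival T R (cd T a)" using aJ V W unfolding wis_join_def by auto
  then show "a \<in> R" unfolding Ival_def by auto
qed

inductive_set Kset :: "('o,'m) cat \<Rightarrow> ('o,'m) tsub \<Rightarrow> ('o,'m) tsub \<Rightarrow> 'm set" for T C D where
  kC: "a \<in> frakR T C \<Longrightarrow> a \<in> Kset T C D"
| kD: "a \<in> frakR T D \<Longrightarrow> a \<in> Kset T C D"
| kc: "f \<in> Kset T C D \<Longrightarrow> g \<in> Kset T C D \<Longrightarrow> cd T f = dm T g \<Longrightarrow> cmp T g f \<in> Kset T C D"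

lemma K_mr: assumes cat: "category T" and a: "a \<in> Kset T C D" shows "a \<in> mr T"
  using a by (induction rule: Kset.induct) (auto simp: frakR_def dest: cat_comp[OF cat])

lemma cancel:
  assumes cat: "category T" and inv: "invp T u u' A B" and z: "z \<in> hom T B C" and v: "v \<in> hom T X B"
  shows "cmp T (cmp T z u) (cmp T u' v) = cmp T z v"
proof -
  have u: "u \<in> hom T A B" "u' \<in> hom T B A" "cmp T u u' = idm T B" using inv unfolding invp_def by auto
  have "cmp T (cmp T z u) (cmp T u' v) = cmp T z (cmp T u (cmp T u' v))"
    using assoc[OF cat comp_hom[OF cat v u(2)] u(1) z] .
  also have "\<dots> = cmp T z (cmp T (cmp T u u') v)" using assoc[OF cat v u(2) u(1)] by simp
  also have "\<dots> = cmp T z v" using u(3) idl[OF cat v] by simp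
  finally show ?thesis .
qed

lemma K_restr:
  assumes orb: "orbital T" and UC: "unital_wis T C" and UD: "unital_wis T D"
    and aK: "a \<in> Kset T C D"
  shows "\<forall>V U c U' P p q l u u' V'. a \<in> hom T V U \<longrightarrow> c \<in> hom T U' U \<longrightarrow>
      is_F_pullback T [V] [U'] [U] (single a) (single c) P p q \<longrightarrow> l < length P \<longrightarrow>
      invp T u u' V' (P!l) \<longrightarrow> cmp T (snd q l) u \<in> Kset T C D"
  using aK
proof (induction rule: Kset.induct)
  have cat: "category T" using orb unfolding orbital_def by blast
  {
    case (kC a)
    show ?case by (intro allI impI, rule Kset.kC, rule TS_restr_use[OF cat frakR_TS[OF cat UC] kC]; assumption)
  next
    case (kD a)
    show ?case by (intro allI impI, rule Kset.kD, rule TS_restr_use[OF cat frakR_TS[OF cat UD] kD]; assumption)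
  next
    case (kc f g)
    show ?case
    proof (intro allI impI)
      fix V U c U' P p q l u u' V'
      assume a: "cmp T g f \<in> hom T V U" and c: "c \<in> hom T U' U"
        and pb: "is_F_pullback T [V] [U'] [U] (single (cmp T g f)) (single c) P p q"
        and l: "l < length P" and inv: "invp T u u' V' (P!l)"
      have fm: "f \<in> mr T" and gm: "g \<in> mr T" using K_mr[OF cat] kc.hyps by auto
      define Y where "Y = cd T f"
      have f: "f \<in> hom T V Y" and g: "g \<in> hom T Y U" using a cat_comp[OF cat fm gm kc.hyps(3)] fm gm kc.hyps(3)
        unfolding Y_def hom_def by auto
      have el: "pb_el T [V] [U'] [U] (single (cmp T g f)) (single c) P p q" using pb_to_el[OF cat pb] .
      have hp: "F_hom T P [V] p" and hq: "F_hom T P [U'] q"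
        and comm: "F_eq P (F_comp T (single (cmp T g f)) p) (F_comp T (single c) q)"
        and exP: "\<And>w x y \<alpha> \<beta>. w \<in> ob T \<Longrightarrow> x < length [V] \<Longrightarrow> y < length [U'] \<Longrightarrow> \<alpha> \<in> hom T w ([V]!x) \<Longrightarrow>
          \<beta> \<in> hom T w ([U']!y) \<Longrightarrow> fst (single (cmp T g f)) x = fst (single c) y \<Longrightarrow>
          cmp T (snd (single (cmp T g f)) x) \<alpha> = cmp T (snd (single c) y) \<beta> \<Longrightarrow>
          (\<exists>j<length P. \<exists>u\<in>hom T w (P!j). fst p j = x \<and> cmp T (snd p j) u = \<alpha> \<and>
              fst q j = y \<and> cmp T (snd q j) u = \<beta>)"
        and unP: "\<And>w j j' u u'. j < length P \<Longrightarrow> j' < length P \<Longrightarrow> u \<in> hom T w (P!j) \<Longrightarrow> u' \<in> hom T w (P!j') \<Longrightarrow>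
          fst p j = fst p j' \<Longrightarrow> fst q j = fst q j' \<Longrightarrow> cmp T (snd p j) u = cmp T (snd p j') u' \<Longrightarrow>
          cmp T (snd q j) u = cmp T (snd q j') u' \<Longrightarrow> j = j' \<and> u = u'"
        using el unfolding pb_el_def by blast+
      have pi: "fst p i = 0 \<and> snd p i \<in> hom T (P!i) V" if "i < length P" for i using F_homD[OF hp that] by auto
      have qi: "fst q i = 0 \<and> snd q i \<in> hom T (P!i) U'" if "i < length P" for i using F_homD[OF hq that] by auto
      have u: "u \<in> hom T V' (P!l)" "u' \<in> hom T (P!l) V'" "cmp T u' u = idm T V'" using inv unfolding invp_def by auto
      have V': "V' \<in> ob T" using hom_ob[OF cat u(1)] by blast
      have pl: "snd p l \<in> hom T (P!l) V" and ql: "snd q l \<in> hom T (P!l) U'" using pi[OF l] qi[OF l] by auto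
      define b where "b = cmp T (snd p l) u"
      define a' where "a' = cmp T (snd q l) u"
      have b: "b \<in> hom T V' V" unfolding b_def using comp_hom[OF cat u(1) pl] .
      have a': "a' \<in> hom T V' U'" unfolding a'_def using comp_hom[OF cat u(1) ql] .
      have sq: "cmp T (cmp T g f) (snd p l) = cmp T c (snd q l)" using comm l
        by (auto simp: F_eq_def F_comp_def single_def)
      have sq2: "cmp T (cmp T g f) b = cmp T c a'" unfolding b_def a'_def
        using assoc[OF cat u(1) pl a] assoc[OF cat u(1) ql c] sq by simp
      have fb: "cmp T f b \<in> hom T V' Y" using comp_hom[OF cat b f] .
      have sq3: "cmp T g (cmp T f b) = cmp T c a'" using assoc[OF cat b f g] sq2 by simp
      obtain P1 p1 q1 where pb1: "is_F_pullback T [Y] [U'] [U] (single g) (single c) P1 p1 q1"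
        using orbital_pb[OF orb F_hom_single[OF cat g] F_hom_single[OF cat c]] by blast
      have el1: "pb_el T [Y] [U'] [U] (single g) (single c) P1 p1 q1" using pb_to_el[OF cat pb1] .
      have hp1: "F_hom T P1 [Y] p1" and hq1: "F_hom T P1 [U'] q1"
        and comm1: "F_eq P1 (F_comp T (single g) p1) (F_comp T (single c) q1)"
        and ex1: "\<And>w x y \<alpha> \<beta>. w \<in> ob T \<Longrightarrow> x < length [Y] \<Longrightarrow> y < length [U'] \<Longrightarrow> \<alpha> \<in> hom T w ([Y]!x) \<Longrightarrow>
          \<beta> \<in> hom T w ([U']!y) \<Longrightarrow> fst (single g) x = fst (single c) y \<Longrightarrow>
          cmp T (snd (single g) x) \<alpha> = cmp T (snd (single c) y) \<beta> \<Longrightarrow>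
          (\<exists>j<length P1. \<exists>u\<in>hom T w (P1!j). fst p1 j = x \<and> cmp T (snd p1 j) u = \<alpha> \<and>
              fst q1 j = y \<and> cmp T (snd q1 j) u = \<beta>)"
        and un1: "\<And>w j j' u u'. j < length P1 \<Longrightarrow> j' < length P1 \<Longrightarrow> u \<in> hom T w (P1!j) \<Longrightarrow> u' \<in> hom T w (P1!j') \<Longrightarrow>
          fst p1 j = fst p1 j' \<Longrightarrow> fst q1 j = fst q1 j' \<Longrightarrow> cmp T (snd p1 j) u = cmp T (snd p1 j') u' \<Longrightarrow>
          cmp T (snd q1 j) u = cmp T (snd q1 j') u' \<Longrightarrow> j = j' \<and> u = u'"
        using el1 unfolding pb_el_def by blast+
      obtain j e where j: "j < length P1" "e \<in> hom T V' (P1!j)" "fst p1 j = 0" "cmp T (snd p1 j) e = cmp T f b"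
        "fst q1 j = 0" "cmp T (snd q1 j) e = a'"
        using ex1[of V' 0 0 "cmp T f b" a'] V' fb a' sq3 by (auto simp: single_def)
      have p1j: "snd p1 j \<in> hom T (P1!j) Y" using F_homD[OF hp1 j(1)] j(3) by simp
      have q1j: "snd q1 j \<in> hom T (P1!j) U'" using F_homD[OF hq1 j(1)] j(5) by simp
      have P1j: "P1!j \<in> ob T" using hom_ob[OF cat p1j] by blast
      have sq1: "cmp T g (snd p1 j) = cmp T c (snd q1 j)" using comm1 j(1,3,5)
        by (auto simp: F_eq_def F_comp_def single_def)
      have idinv: "invp T (idm T (P1!j)) (idm T (P1!j)) (P1!j) (P1!j)"
        unfolding invp_def using id_hom[OF cat P1j] idl[OF cat id_hom[OF cat P1j]] by simp
      have "cmp T (snd q1 j) (idm T (P1!j)) \<in> Kset T C D"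
        using kc.IH(2)[rule_format, OF g c pb1 j(1) idinv] .
      then have q1K: "snd q1 j \<in> Kset T C D" using idr[OF cat q1j] by simp
      obtain P2 p2 q2 where pb2: "is_F_pullback T [V] [P1!j] [Y] (single f) (single (snd p1 j)) P2 p2 q2"
        using orbital_pb[OF orb F_hom_single[OF cat f] F_hom_single[OF cat p1j]] by blast
      have el2: "pb_el T [V] [P1!j] [Y] (single f) (single (snd p1 j)) P2 p2 q2" using pb_to_el[OF cat pb2] .
      have hp2: "F_hom T P2 [V] p2" and hq2: "F_hom T P2 [P1!j] q2"
        and comm2: "F_eq P2 (F_comp T (single f) p2) (F_comp T (single (snd p1 j)) q2)"
        and ex2: "\<And>w x y \<alpha> \<beta>. w \<in> ob T \<Longrightarrow> x < length [V] \<Longrightarrow> y < length [P1!j] \<Longrightarrow> \<alpha> \<in> hom T w ([V]!x) \<Longrightarrow>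
          \<beta> \<in> hom T w ([P1!j]!y) \<Longrightarrow> fst (single f) x = fst (single (snd p1 j)) y \<Longrightarrow>
          cmp T (snd (single f) x) \<alpha> = cmp T (snd (single (snd p1 j)) y) \<beta> \<Longrightarrow>
          (\<exists>j<length P2. \<exists>u\<in>hom T w (P2!j). fst p2 j = x \<and> cmp T (snd p2 j) u = \<alpha> \<and>
              fst q2 j = y \<and> cmp T (snd q2 j) u = \<beta>)"
        and un2: "\<And>w j j' u u'. j < length P2 \<Longrightarrow> j' < length P2 \<Longrightarrow> u \<in> hom T w (P2!j) \<Longrightarrow> u' \<in> hom T w (P2!j') \<Longrightarrow>
          fst p2 j = fst p2 j' \<Longrightarrow> fst q2 j = fst q2 j' \<Longrightarrow> cmp T (snd p2 j) u = cmp T (snd p2 j') u' \<Longrightarrow>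
          cmp T (snd q2 j) u = cmp T (snd q2 j') u' \<Longrightarrow> j = j' \<and> u = u'"
        using el2 unfolding pb_el_def by blast+
      obtain l2 u2 where l2: "l2 < length P2" "u2 \<in> hom T V' (P2!l2)" "fst p2 l2 = 0" "cmp T (snd p2 l2) u2 = b"
        "fst q2 l2 = 0" "cmp T (snd q2 l2) u2 = e"
        using ex2[of V' 0 0 b e] V' b j(2,4) by (auto simp: single_def)
      define x where "x = snd p2 l2"
      define y where "y = snd q2 l2"
      have x: "x \<in> hom T (P2!l2) V" unfolding x_def using F_homD[OF hp2 l2(1)] l2(3) by simp
      have y: "y \<in> hom T (P2!l2) (P1!j)" unfolding y_def using F_homD[OF hq2 l2(1)] l2(5) by simp
      have P2l: "P2!l2 \<in> ob T" using hom_ob[OF cat x] by blast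
      have sqx: "cmp T f x = cmp T (snd p1 j) y" using comm2 l2(1,3,5) unfolding x_def y_def
        by (auto simp: F_eq_def F_comp_def single_def)
      have q1y: "cmp T (snd q1 j) y \<in> hom T (P2!l2) U'" using comp_hom[OF cat y q1j] .
      have "cmp T (cmp T g f) x = cmp T g (cmp T f x)" using assoc[OF cat x f g] .
      also have "\<dots> = cmp T (cmp T g (snd p1 j)) y" using sqx assoc[OF cat y p1j g] by simp
      also have "\<dots> = cmp T c (cmp T (snd q1 j) y)" using sq1 assoc[OF cat y q1j c] by simp
      finally have sq4: "cmp T (cmp T g f) x = cmp T c (cmp T (snd q1 j) y)" .
      obtain r v where r: "r < length P" "v \<in> hom T (P2!l2) (P!r)" "fst p r = 0" "cmp T (snd p r) v = x"
        "fst q r = 0" "cmp T (snd q r) v = cmp T (snd q1 j) y"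
        using exP[of "P2!l2" 0 0 x "cmp T (snd q1 j) y"] P2l x q1y sq4 by (auto simp: single_def)
      have pr: "snd p r \<in> hom T (P!r) V" and qr: "snd q r \<in> hom T (P!r) U'" using pi[OF r(1)] qi[OF r(1)] by auto
      have vu2: "cmp T v u2 \<in> hom T V' (P!r)" using comp_hom[OF cat l2(2) r(2)] .
      have e1: "cmp T (snd p r) (cmp T v u2) = cmp T (snd p l) u"
        using assoc[OF cat l2(2) r(2) pr] r(4) l2(4) unfolding x_def b_def by simp
      have e2: "cmp T (snd q r) (cmp T v u2) = cmp T (snd q l) u"
        using assoc[OF cat l2(2) r(2) qr] r(6) assoc[OF cat l2(2) y q1j] l2(6) j(6) unfolding y_def a'_def by simp
      have "r = l \<and> cmp T v u2 = u"
        using unP[OF r(1) l vu2 u(1)] r(3,5) pi[OF l] qi[OF l] e1 e2 by auto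
      then have rl: "r = l" and vu: "cmp T v u2 = u" by auto
      have v: "v \<in> hom T (P2!l2) (P!l)" using r(2) rl by simp
      define w where "w = cmp T u' v"
      have w: "w \<in> hom T (P2!l2) V'" unfolding w_def using comp_hom[OF cat v u(2)] .
      have wu2: "cmp T w u2 = idm T V'" unfolding w_def using assoc[OF cat l2(2) v u(2)] vu u(3) by simp
      have bw: "cmp T b w = x" unfolding b_def w_def using cancel[OF cat inv pl v] r(4) rl by simp
      have a'w: "cmp T a' w = cmp T (snd q1 j) y" unfolding a'_def w_def using cancel[OF cat inv ql v] r(6) rl by simp
      have ew: "cmp T e w \<in> hom T (P2!l2) (P1!j)" using comp_hom[OF cat w j(2)] .
      have c1: "cmp T (snd p1 j) (cmp T e w) = cmp T (snd p1 j) y"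
        using assoc[OF cat w j(2) p1j] j(4) assoc[OF cat w b f] bw sqx by simp
      have c2: "cmp T (snd q1 j) (cmp T e w) = cmp T (snd q1 j) y"
        using assoc[OF cat w j(2) q1j] j(6) a'w by simp
      have "j = j \<and> cmp T e w = y" using un1[OF j(1) j(1) ew y] c1 c2 by simp
      then have ewy: "cmp T e w = y" by simp
      have u2w: "cmp T u2 w \<in> hom T (P2!l2) (P2!l2)" using comp_hom[OF cat w l2(2)] .
      have d1: "cmp T x (cmp T u2 w) = cmp T x (idm T (P2!l2))"
        using assoc[OF cat w l2(2) x] l2(4) bw idr[OF cat x] unfolding x_def by simp
      have d2: "cmp T y (cmp T u2 w) = cmp T y (idm T (P2!l2))"
        using assoc[OF cat w l2(2) y] l2(6) ewy idr[OF cat y] unfolding y_def by simp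
      have "l2 = l2 \<and> cmp T u2 w = idm T (P2!l2)"
        using un2[OF l2(1) l2(1) u2w id_hom[OF cat P2l]] d1 d2 unfolding x_def y_def by simp
      then have inv2: "invp T u2 w V' (P2!l2)" unfolding invp_def using l2(2) w wu2 by simp
      have "cmp T (snd q2 l2) u2 \<in> Kset T C D" using kc.IH(1)[rule_format, OF f p1j pb2 l2(1) inv2] .
      then have eK: "e \<in> Kset T C D" using l2(6) by simp
      have "cd T e = dm T (snd q1 j)" using j(2) q1j by (simp add: hom_def)
      then have "cmp T (snd q1 j) e \<in> Kset T C D" using Kset.kc[OF eK q1K] by simp
      then show "cmp T (snd q l) u \<in> Kset T C D" using j(6) unfolding a'_def by simp
    qed
  }
qed

lemma K_TS:
  assumes orb: "orbital T" and UC: "unital_wis T C" and UD: "unital_wis T D"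
  shows "transfer_system T (Kset T C D)"
proof -
  have cat: "category T" using orb unfolding orbital_def by blast
  have 1: "Kset T C D \<subseteq> mr T" using K_mr[OF cat] by blast
  have 2: "\<forall>f. iso T f \<longrightarrow> f \<in> Kset T C D"
    by (intro allI impI, rule Kset.kC, rule TS_iso[OF frakR_TS[OF cat UC]])
  have 3: "\<forall>f\<in>Kset T C D. \<forall>g\<in>Kset T C D. cd T f = dm T g \<longrightarrow> cmp T g f \<in> Kset T C D"
    by (intro ballI impI, rule Kset.kc)
  have 4: "\<forall>V' V U' U b a' a c.
        b \<in> hom T V' V \<longrightarrow> a' \<in> hom T V' U' \<longrightarrow> a \<in> hom T V U \<longrightarrow> c \<in> hom T U' U \<longrightarrow>
        cmp T a b = cmp T c a' \<longrightarrow> a \<in> Kset T C D \<longrightarrow>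
        (\<exists>P p q m. is_F_pullback T [V] [U'] [U] (single a) (single c) P p q \<and>
           F_hom T [V'] P m \<and> F_eq [V'] (F_comp T p m) (single b) \<and>
           F_eq [V'] (F_comp T q m) (single a') \<and> F_summand_incl T [V'] P m) \<longrightarrow>
        a' \<in> Kset T C D"
    by (rule TS_restr_intro[OF cat]) (rule K_restr[OF orb UC UD, rule_format]; assumption)
  show ?thesis unfolding transfer_system_def by (rule conjI[OF 1 conjI[OF 2 conjI[OF 3 4]]])
qed

lemma K_E:
  assumes cat: "category T" and aK: "a \<in> Kset T C D" and E: "weak_indexing_system T E"
    and sub: "\<forall>W\<in>ob T. C W \<subseteq> E W \<and> D W \<subseteq> E W"
  shows "[a] \<in> E (cd T a)"
  using aK
proof (induction rule: Kset.induct)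
  case (kC a) then show ?case using sub cat_dmcd[OF cat] unfolding frakR_def by blast
next
  case (kD a) then show ?case using sub cat_dmcd[OF cat] unfolding frakR_def by blast
next
  case (kc f g)
  have cp: "\<forall>V\<in>ob T. \<forall>S\<in>E V. \<forall>Ts. (\<forall>i<length S. Ts i \<in> E (dm T (S!i))) \<longrightarrow> S_coprod T S Ts \<in> E V"
    using E unfolding weak_indexing_system_def by blast
  have fm: "f \<in> mr T" and gm: "g \<in> mr T" using K_mr[OF cat] kc.hyps by auto
  have V: "cd T g \<in> ob T" using cat_dmcd[OF cat gm] by blast
  have "S_coprod T [g] (\<lambda>_. [f]) \<in> E (cd T g)" using cp V kc.IH kc.hyps(3) by simp
  moreover have "S_coprod T [g] (\<lambda>_. [f]) = [cmp T g f]" by (simp add: S_coprod_def Ind_def)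
  ultimately show ?case using cat_comp[OF cat fm gm kc.hyps(3)] by simp
qed

lemma K_sub_join:
  assumes cat: "category T" and aK: "a \<in> Kset T C D"
  shows "a \<in> frakR T (wis_join T C D)"
proof -
  have am: "a \<in> mr T" using K_mr[OF cat aK] .
  have V: "cd T a \<in> ob T" using cat_dmcd[OF cat am] by blast
  have "\<forall>E. weak_indexing_system T E \<and> (\<forall>W\<in>ob T. C W \<subseteq> E W \<and> D W \<subseteq> E W) \<longrightarrow> [a] \<in> E (cd T a)"
    using K_E[OF cat aK] by blast
  then have "[a] \<in> wis_join T C D (cd T a)" unfolding wis_join_def using V by (simp, blast)
  then show ?thesis using am unfolding frakR_def by auto
qed

theorem mainTheorem16:
  fixes T :: "('o, 'm) cat" and C D :: "('o, 'm) tsub"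
  assumes "orbital T" and "unital_wis T C" and "unital_wis T D"
  shows "transf_join T (frakR T C) (frakR T D) = frakR T (wis_join T C D)
       \<and> frakR T C \<inter> frakR T D = frakR T (wis_meet C D)"
proof
  have cat: "category T" using assms(1) unfolding orbital_def by blast
  show "transf_join T (frakR T C) (frakR T D) = frakR T (wis_join T C D)"
  proof
    have "frakR T C \<union> frakR T D \<subseteq> Kset T C D"
    proof
      fix x assume "x \<in> frakR T C \<union> frakR T D"
      then show "x \<in> Kset T C D"
      proof
        assume "x \<in> frakR T C" then show ?thesis by (rule Kset.kC)
      next
        assume "x \<in> frakR T D" then show ?thesis by (rule Kset.kD)
      qed
    qed
    then have "transf_join T (frakR T C) (frakR T D) \<subseteq> Kset T C D"
      unfolding transf_join_def using K_TS[OF assms] by blast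
    then show "transf_join T (frakR T C) (frakR T D) \<subseteq> frakR T (wis_join T C D)"
      using K_sub_join[OF cat] by blast
  next
    show "frakR T (wis_join T C D) \<subseteq> transf_join T (frakR T C) (frakR T D)"
      unfolding transf_join_def using dirA[OF assms] by blast
  qed
next
  show "frakR T C \<inter> frakR T D = frakR T (wis_meet C D)"
    unfolding frakR_def wis_meet_def by auto
qed

end
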